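(* $R(\mathscr N)\subset[0,1]\setminus\mathscr N$. Consequently $R$ is a singular Borel function: there is a Lebesgue-null set $Z=[0,1]\setminus\mathscr N$ with $\lambda(R^{-1}(Z))=1$, where $\lambda$ is Lebesgue measure.
   Context: Define $\rho$ on binary words: for $b=b_1b_2\dots$, $\rho(b)$ is obtained by deleting every digit $b_n=0$ and replacing every $b_n=1$ by $0$ if $n$ is odd and by $1$ if $n$ is even. For $x\in(0,1]$ let $\beta(x)$ be the unique binary expansion of $x$ with infinitely many $1$'s. Define $R:[0,1]\to[0,1]$ by $R(0)=2/3$ and, for $x\in(0,1]$, $R(x)=\sum_{n\ge1}c_n2^{-n}$ where $c=\rho(\beta(x))$. $\mathscr N\subset[0,1]$ denotes the set of numbers normal in base $2$. *)

theory Defs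
  imports "HOL-Analysis.Analysis" "HOL-Library.Infinite_Set"
begin

text \<open>Binary words are sequences b :: nat => nat, indexed from 1 (b 0 is unused, set to 0).\<close>

definition beta :: "real \<Rightarrow> (nat \<Rightarrow> nat)" where
  "beta x = (THE b. b 0 = 0 \<and> (\<forall>n. b n \<le> 1) \<and> infinite {n. b n = 1}
                 \<and> (\<lambda>n. real (b n) / 2 ^ n) sums x)"

text \<open>rho b: delete the digits 0 and replace the digit 1 at position n by 0 if n is odd and
  by 1 if n is even. Position k (k >= 1) of the result comes from the k-th one of b.\<close>
definition rho :: "(nat \<Rightarrow> nat) \<Rightarrow> (nat \<Rightarrow> nat)" where
  "rho b k = (let S = {n. 1 \<le> n \<and> b n = 1} in
     if 1 \<le> k \<and> (infinite S \<or> k \<le> card S)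
     then (if even (Infinite_Set.enumerate S (k - 1)) then 1 else 0)
     else 0)"

definition R :: "real \<Rightarrow> real" where
  "R x = (if x = 0 then 2/3 else (\<Sum>n. real (rho (beta x) n) / 2 ^ n))"

definition bdig :: "real \<Rightarrow> nat \<Rightarrow> nat" where
  "bdig x n = nat (\<lfloor>2 ^ n * x\<rfloor> mod 2)"

definition normal2 :: "real set" where
  "normal2 = {x \<in> {0..1}. \<forall>w. w \<noteq> [] \<and> set w \<subseteq> {0, 1} \<longrightarrow>
      ((\<lambda>N. real (card {i \<in> {1..N}. \<forall>j < length w. bdig x (i + j) = w ! j}) / real N)
        \<longlonglongrightarrow> 1 / 2 ^ length w)}"

end

theory Submission
  imports Defs "HOL-Library.Discrete_Functions"
begin


definition cdig :: "real \<Rightarrow> nat \<Rightarrow> nat" where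
  "cdig x n = (if n = 0 then 0 else nat ((\<lceil>2^n * x\<rceil> - 1) mod 2))"

lemma half_pow_sums: "(\<lambda>k. 1 / (2::real)^(k+1)) sums 1"
  using power_half_series by (simp add: power_divide)

lemma tail_decomp:
  fixes b :: "nat \<Rightarrow> nat"
  assumes b1: "\<And>n. b n \<le> 1" and s: "(\<lambda>n. real (b n) / 2^n) sums x"
  shows "(\<lambda>k. real (b (k+n+1)) / 2^(k+1)) sums (2^n * x - real (\<Sum>k\<le>n. b k * 2^(n-k)))"
proof -
  let ?f = "\<lambda>n. real (b n) / 2^n"
  have "(\<lambda>i. ?f (i + Suc n)) sums (x - (\<Sum>i<Suc n. ?f i))"
    using s sums_iff_shift[of ?f "Suc n" "x - (\<Sum>i<Suc n. ?f i)"] by simp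
  then have "(\<lambda>i. 2^n * ?f (i + Suc n)) sums (2^n * (x - (\<Sum>i<Suc n. ?f i)))"
    by (rule sums_mult)
  moreover have "2^n * ?f (i + Suc n) = real (b (i+n+1)) / 2^(i+1)" for i
    by (simp add: power_add)
  moreover have "2^n * (\<Sum>i<Suc n. ?f i) = real (\<Sum>k\<le>n. b k * 2^(n-k))"
  proof -
    have "2^n * (\<Sum>i<Suc n. ?f i) = (\<Sum>k\<le>n. 2^n * ?f k)"
      by (simp add: sum_distrib_left lessThan_Suc_atMost)
    also have "\<dots> = (\<Sum>k\<le>n. real (b k * 2^(n-k)))"
    proof (intro sum.cong refl)
    fix k assume "k \<in> {..n}"
    then obtain d where "n = k + d" using le_Suc_ex by auto
    then show "2^n * ?f k = real (b k * 2^(n-k))" by (simp add: power_add)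
  qed
    finally show ?thesis by simp
  qed
  ultimately show ?thesis by (simp add: right_diff_distrib)
qed

lemma half_dominated:
  fixes g :: "nat \<Rightarrow> real"
  assumes nn: "\<And>k. 0 \<le> g k" and le: "\<And>k. g k \<le> 1 / 2^(k+1)"
  shows "summable g" "suminf g \<le> 1" "0 < g i \<Longrightarrow> 0 < suminf g"
    "g j < 1 / 2^(j+1) \<Longrightarrow> suminf g < 1"
proof -
  have sh: "summable (\<lambda>k. 1 / (2::real)^(k+1))" using half_pow_sums by (rule sums_summable)
  have s1: "(\<Sum>k. 1 / (2::real)^(k+1)) = 1" using half_pow_sums by (rule sums_unique[symmetric])
  show sm: "summable g"
  proof (rule summable_comparison_test'[OF sh])
    fix k show "norm (g k) \<le> 1 / 2^(k+1)" using le[of k] nn[of k] by simp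
  qed
  show "suminf g \<le> 1" using suminf_le[OF le sm sh] s1 by linarith
  show "0 < suminf g" if "0 < g i" by (rule suminf_pos2[OF sm nn that])
  show "suminf g < 1" if j: "g j < 1 / 2^(j+1)"
  proof -
    define h where "h k = 1 / (2::real)^(k+1) - g k" for k
    have smh: "summable h" unfolding h_def using summable_diff[OF sh sm] .
    have "0 < suminf h" by (rule suminf_pos2[OF smh, of j]) (use le j in \<open>auto simp: h_def\<close>)
    moreover have "suminf h = 1 - suminf g"
      unfolding h_def using suminf_diff[OF sh sm] s1 by simp
    ultimately show ?thesis by simp
  qed
qed
lemma tail_bounds:
  fixes b :: "nat \<Rightarrow> nat"
  assumes b1: "\<And>n. b n \<le> 1"
  shows "summable (\<lambda>k. real (b (k+n+1)) / 2^(k+1))"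
    and "(\<Sum>k. real (b (k+n+1)) / 2^(k+1)) \<le> 1"
    and "(\<exists>m>n. b m = 1) \<Longrightarrow> 0 < (\<Sum>k. real (b (k+n+1)) / 2^(k+1))"
    and "(\<exists>m>n. b m = 0) \<Longrightarrow> (\<Sum>k. real (b (k+n+1)) / 2^(k+1)) < 1"
proof -
  define g where "g = (\<lambda>k. real (b (k+n+1)) / 2^(k+1))"
  have le: "g k \<le> 1 / 2^(k+1)" for k unfolding g_def using b1[of "k+n+1"] by (intro divide_right_mono) auto
  have nn: "0 \<le> g k" for k unfolding g_def by simp
  note hd = half_dominated[of g, OF nn le]
  show "summable (\<lambda>k. real (b (k+n+1)) / 2^(k+1))" using hd(1) unfolding g_def .
  show "(\<Sum>k. real (b (k+n+1)) / 2^(k+1)) \<le> 1" using hd(2) unfolding g_def .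
  show "0 < (\<Sum>k. real (b (k+n+1)) / 2^(k+1))" if "\<exists>m>n. b m = 1"
  proof -
    from that obtain m where m: "m > n" "b m = 1" by auto
    have e: "m - n - 1 + n + 1 = m" using m(1) by simp
    have "0 < g (m - n - 1)" unfolding g_def e using m(2) by simp
    from hd(3)[OF this] show ?thesis unfolding g_def .
  qed
  show "(\<Sum>k. real (b (k+n+1)) / 2^(k+1)) < 1" if "\<exists>m>n. b m = 0"
  proof -
    from that obtain m where m: "m > n" "b m = 0" by auto
    have e: "m - n - 1 + n + 1 = m" using m(1) by simp
    have "g (m - n - 1) < 1 / 2^(m-n-1+1)" unfolding g_def e using m(2) by simp
    from hd(4)[OF this] show ?thesis unfolding g_def .
  qed
qed

lemma P_Suc: "(\<Sum>k\<le>Suc n. (b k::nat) * 2^(Suc n-k)) = 2 * (\<Sum>k\<le>n. b k * 2^(n-k)) + b (Suc n)"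
proof -
  have "(\<Sum>k\<le>n. b k * 2^(Suc n-k)) = (\<Sum>k\<le>n. 2 * (b k * 2^(n-k)))"
    by (intro sum.cong refl) (simp add: Suc_diff_le)
  then show ?thesis by (simp add: sum_distrib_left)
qed

lemma P_mod2:
  assumes "\<And>n. (b::nat\<Rightarrow>nat) n \<le> 1" "n \<ge> 1"
  shows "(\<Sum>k\<le>n. b k * 2^(n-k)) mod 2 = b n"
proof -
  obtain m where n: "n = Suc m" using assms(2) by (cases n) auto
  show ?thesis using assms(1)[of n] unfolding n P_Suc by simp
qed

lemma ones_expansion_digits:
  fixes b :: "nat \<Rightarrow> nat"
  assumes b1: "\<And>n. b n \<le> 1" and inf: "infinite {n. b n = 1}"
    and s: "(\<lambda>n. real (b n) / 2^n) sums x" and n: "n \<ge> 1"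
  shows "b n = nat ((\<lceil>2^n * x\<rceil> - 1) mod 2)"
proof -
  let ?P = "\<Sum>k\<le>n. b k * 2^(n-k)"
  let ?T = "\<Sum>k. real (b (k+n+1)) / 2^(k+1)"
  have T: "?T = 2^n * x - real ?P" using tail_decomp[OF b1 s, of n] by (simp add: sums_iff)
  have "\<exists>m>n. b m = 1"
  proof -
    have "\<not> {n. b n = 1} \<subseteq> {..n}" using inf finite_subset by blast
    then show ?thesis by (auto simp: not_le)
  qed
  then have "0 < ?T" "?T \<le> 1" using tail_bounds[where b=b and n=n, OF b1] by auto
  then have "\<lceil>2^n * x\<rceil> = int ?P + 1" using T
    by (intro ceiling_unique) auto
  then have "\<lceil>2^n * x\<rceil> - 1 = int ?P" by linarith
  then have "nat ((\<lceil>2^n * x\<rceil> - 1) mod 2) = ?P mod 2"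
    by (metis nat_int of_nat_numeral zmod_int)
  with P_mod2[OF b1 n] show ?thesis by simp
qed

lemma zeros_expansion_digits:
  fixes b :: "nat \<Rightarrow> nat"
  assumes b1: "\<And>n. b n \<le> 1" and inf: "infinite {n. b n = 0}"
    and s: "(\<lambda>n. real (b n) / 2^n) sums x" and n: "n \<ge> 1"
  shows "bdig x n = b n"
proof -
  let ?P = "\<Sum>k\<le>n. b k * 2^(n-k)"
  let ?T = "\<Sum>k. real (b (k+n+1)) / 2^(k+1)"
  have T: "?T = 2^n * x - real ?P" using tail_decomp[OF b1 s, of n] by (simp add: sums_iff)
  have "\<exists>m>n. b m = 0"
  proof -
    have "\<not> {n. b n = 0} \<subseteq> {..n}" using inf finite_subset by blast
    then show ?thesis by (auto simp: not_le)
  qed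
  then have "0 \<le> ?T" "?T < 1" using tail_bounds[where b=b and n=n, OF b1] by (auto intro: suminf_nonneg)
  then have "\<lfloor>2^n * x\<rfloor> = int ?P" using T
    by (intro floor_unique) auto
  then have "bdig x n = ?P mod 2"
    unfolding bdig_def by (metis nat_int of_nat_numeral zmod_int)
  with P_mod2[OF b1 n] show ?thesis by simp
qed

lemma ceil_double: "(\<lceil>2 * (y::real)\<rceil> - 1) div 2 = \<lceil>y\<rceil> - (1::int)"
proof -
  have "\<lceil>2*y\<rceil> = 2*\<lceil>y\<rceil> - 1 \<or> \<lceil>2*y\<rceil> = 2*\<lceil>y\<rceil>"
  proof -
    have a: "real_of_int \<lceil>y\<rceil> - 1 < y" "y \<le> real_of_int \<lceil>y\<rceil>" by linarith+
    have "\<lceil>2*y\<rceil> \<le> 2*\<lceil>y\<rceil>" using a by (simp add: ceiling_le_iff)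
    moreover have "2*\<lceil>y\<rceil> - 2 < \<lceil>2*y\<rceil>" using a by (simp add: less_ceiling_iff)
    ultimately show ?thesis by linarith
  qed
  then show ?thesis by auto
qed

lemma cdig_props:
  fixes x :: real
  assumes x: "0 < x" "x \<le> 1"
  shows "cdig x 0 = 0" "\<And>n. cdig x n \<le> 1" "infinite {n. cdig x n = 1}"
    "(\<lambda>n. real (cdig x n) / 2^n) sums x"
proof -
  define c where "c n = \<lceil>2^n * x\<rceil> - 1" for n
  show "cdig x 0 = 0" by (simp add: cdig_def)
  show le1: "cdig x n \<le> 1" for n
  proof -
    have "(z::int) mod 2 \<le> 1" for z by presburger
    then show ?thesis by (simp add: cdig_def nat_le_iff)
  qed
  have c0: "c 0 = 0" using x by (simp add: c_def ceiling_eq_iff)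
  have cSuc: "c (Suc n) = 2 * c n + int (cdig x (Suc n))" for n
  proof -
    have "c (Suc n) div 2 = c n"
      using ceil_double[of "2^n*x"] by (simp add: c_def mult.assoc)
    moreover have "int (cdig x (Suc n)) = c (Suc n) mod 2" by (simp add: cdig_def c_def)
    ultimately show ?thesis by (metis mult_div_mod_eq)
  qed
  have ps: "(\<Sum>k\<le>n. real (cdig x k) / 2^k) = real_of_int (c n) / 2^n" for n
  proof (induction n)
    case 0 then show ?case by (simp add: c0 cdig_def)
  next
    case (Suc n)
    have eq: "real_of_int (c (Suc n)) = 2 * real_of_int (c n) + real (cdig x (Suc n))"
      using cSuc[of n] by simp
    have "(\<Sum>k\<le>Suc n. real (cdig x k) / 2^k) = real_of_int (c n) / 2^n + real (cdig x (Suc n)) / 2^Suc n"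
      using Suc.IH by simp
    also have "\<dots> = (2 * real_of_int (c n) + real (cdig x (Suc n))) / 2^Suc n"
      by (simp add: add_divide_distrib)
    also have "\<dots> = real_of_int (c (Suc n)) / 2^Suc n" using eq by simp
    finally show ?case .
  qed
  have cb: "real_of_int (c n) < 2^n * x" "2^n * x \<le> real_of_int (c n) + 1" for n
    unfolding c_def by linarith+
  have lo: "x - 1/2^n \<le> real_of_int (c n) / 2^n" for n
  proof -
    have "x - 1/2^n = (2^n*x - 1)/2^n" by (simp add: diff_divide_distrib)
    also have "\<dots> \<le> real_of_int (c n) / 2^n" using cb(2)[of n] by (intro divide_right_mono) auto
    finally show ?thesis .
  qed
  have hi: "real_of_int (c n) / 2^n \<le> x" for n
  proof -
    have "real_of_int (c n) / 2^n \<le> (2^n*x)/2^n" using cb(1)[of n] by (intro divide_right_mono) auto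
    then show ?thesis by simp
  qed
  have lim: "(\<lambda>n. real_of_int (c n) / 2^n) \<longlonglongrightarrow> x"
  proof (rule real_tendsto_sandwich[where f="\<lambda>n. x - 1/2^n" and h="\<lambda>n. x"])
    show "\<forall>\<^sub>F n in sequentially. x - 1/2^n \<le> real_of_int (c n) / 2^n"
      using lo by simp
    show "\<forall>\<^sub>F n in sequentially. real_of_int (c n) / 2^n \<le> x"
      using hi by simp
    have "(\<lambda>n. (1/2::real)^n) \<longlonglongrightarrow> 0" by (rule LIMSEQ_power_zero) simp
    then have "(\<lambda>n. x - (1/2::real)^n) \<longlonglongrightarrow> x - 0" by (intro tendsto_diff) auto
    then show "(\<lambda>n. x - 1/2^n) \<longlonglongrightarrow> x" by (simp add: power_one_over)
  qed auto
  show sms: "(\<lambda>n. real (cdig x n) / 2^n) sums x"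
    unfolding sums_def_le ps using lim .
  show "infinite {n. cdig x n = 1}"
  proof
    assume fin: "finite {n. cdig x n = 1}"
    then obtain n0 where n0: "\<forall>n\<in>{n. cdig x n = 1}. n \<le> n0"
      using finite_nat_set_iff_bounded_le by blast
    have z: "cdig x n = 0" if "n > n0" for n
    proof -
      have "cdig x n \<noteq> 1" using n0 that by auto
      then show ?thesis using le1[of n] by linarith
    qed
    have ci: "c (k + n0) = 2^k * c n0" for k
    proof (induction k)
      case (Suc k)
      have "c (Suc k + n0) = 2 * c (k + n0)" using cSuc[of "k+n0"] z[of "Suc (k+n0)"] by simp
      then show ?case using Suc.IH by simp
    qed simp
    have cst: "real_of_int (c (k + n0)) / 2^(k + n0) = real_of_int (c n0) / 2^n0" for k
    proof -
      have "real_of_int (c (k + n0)) / 2^(k + n0) = (2^k * real_of_int (c n0)) / (2^k * 2^n0)"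
        unfolding ci by (simp add: power_add)
      also have "\<dots> = real_of_int (c n0) / 2^n0" by (rule mult_divide_mult_cancel_left) simp
      finally show ?thesis .
    qed
    have "(\<lambda>k. real_of_int (c (k + n0)) / 2^(k+n0)) \<longlonglongrightarrow> real_of_int (c n0) / 2^n0"
      unfolding cst by (rule tendsto_const)
    moreover have "(\<lambda>k. real_of_int (c (k + n0)) / 2^(k+n0)) \<longlonglongrightarrow> x"
      using LIMSEQ_ignore_initial_segment[OF lim, of n0] .
    ultimately have "x = real_of_int (c n0) / 2^n0" using LIMSEQ_unique by blast
    then have "2^n0 * x = real_of_int (c n0)" by simp
    with cb(1)[of n0] show False by linarith
  qed
qed

lemma beta_eq_cdig:
  assumes "0 < x" "x \<le> 1"
  shows "beta x = cdig x"
  unfolding beta_def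
proof (rule the_equality)
  show "cdig x 0 = 0 \<and> (\<forall>n. cdig x n \<le> 1) \<and> infinite {n. cdig x n = 1} \<and> (\<lambda>n. real (cdig x n) / 2 ^ n) sums x"
    using cdig_props[OF assms] by blast
next
  fix b assume b: "b 0 = 0 \<and> (\<forall>n. b n \<le> 1) \<and> infinite {n. b n = 1} \<and> (\<lambda>n. real (b n) / 2 ^ n) sums x"
  show "b = cdig x"
  proof
    fix n show "b n = cdig x n"
    proof (cases "n = 0")
      case True then show ?thesis using b by (simp add: cdig_def)
    next
      case False
      then show ?thesis using ones_expansion_digits[of b x n] b by (simp add: cdig_def)
    qed
  qed
qed


definition win :: "real \<Rightarrow> nat list \<Rightarrow> nat \<Rightarrow> bool" where
  "win x w i = (\<forall>j<length w. bdig x (i+j) = w!j)"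
definition cnt :: "real \<Rightarrow> nat list \<Rightarrow> nat \<Rightarrow> nat" where
  "cnt x w N = card {i\<in>{1..N}. win x w i}"

lemma bdig_le1: "bdig x n \<le> 1"
proof -
  have "(z::int) mod 2 \<le> 1" for z by presburger
  then show ?thesis by (simp add: bdig_def nat_le_iff)
qed

lemma normal2_freq:
  assumes "x \<in> normal2" "w \<noteq> []" "set w \<subseteq> {0,1}"
  shows "(\<lambda>N. real (cnt x w N) / real N) \<longlonglongrightarrow> 1 / 2^length w"
  using assms unfolding normal2_def cnt_def win_def by blast

lemma normal2_01: "x \<in> normal2 \<Longrightarrow> 0 \<le> x \<and> x \<le> 1"
  unfolding normal2_def by auto

lemma normal2_digits:
  assumes xn: "x \<in> normal2" and v: "v \<le> (1::nat)"
  shows "\<exists>m>n. bdig x m = v"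
proof (rule ccontr)
  assume "\<not> (\<exists>m>n. bdig x m = v)"
  then have nv: "bdig x m \<noteq> v" if "m > n" for m using that by auto
  let ?w = "[v]"
  have "?w \<noteq> []" "set ?w \<subseteq> {0,1}" using v by auto
  from normal2_freq[OF xn this] have lim: "(\<lambda>N. real (cnt x ?w N) / real N) \<longlonglongrightarrow> 1/2" by simp
  have sub: "{i\<in>{1..N}. win x ?w i} \<subseteq> {1..n}" for N
  proof
    fix i assume i: "i \<in> {i\<in>{1..N}. win x ?w i}"
    then have "bdig x i = v" by (simp add: win_def)
    then have "i \<le> n" using nv[of i] by linarith
    then show "i \<in> {1..n}" using i by auto
  qed
  have "cnt x ?w N \<le> n" for N
    unfolding cnt_def using card_mono[OF _ sub[of N]] by simp
  then have "real (cnt x ?w N) / real N \<le> real n / real N" for N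
    by (intro divide_right_mono) auto
  moreover have "(\<lambda>N. real n / real N) \<longlonglongrightarrow> 0" by (rule lim_const_over_n)
  ultimately have "1/2 \<le> (0::real)" using LIMSEQ_le[OF lim] by blast
  then show False by simp
qed

lemma normal2_not_dyadic:
  assumes xn: "x \<in> normal2"
  shows "2^n * x \<notin> \<int>"
proof
  assume "2^n * x \<in> \<int>"
  then obtain K where K: "2^n * x = of_int K" by (auto elim: Ints_cases)
  have "bdig x m = 0" if "m > n" for m
  proof -
    obtain d where d: "m = n + Suc d" using \<open>m > n\<close> less_iff_Suc_add by auto
    have "2^m * x = of_int (2^Suc d * K)" using K by (simp add: d power_add)
    then have "\<lfloor>2^m * x\<rfloor> = 2^Suc d * K" by (metis floor_of_int)
    then show ?thesis by (simp add: bdig_def)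
  qed
  with normal2_digits[OF xn, of 1 n] show False by fastforce
qed

lemma normal2_pos: "x \<in> normal2 \<Longrightarrow> 0 < x"
  using normal2_not_dyadic[of x 0] normal2_01[of x] by (cases "x = 0") auto

lemma normal2_cdig:
  assumes xn: "x \<in> normal2" and n: "n \<ge> 1"
  shows "cdig x n = bdig x n"
proof -
  have ni: "2^n * x \<notin> \<int>" by (rule normal2_not_dyadic[OF xn])
  have "\<lceil>2^n * x\<rceil> = \<lfloor>2^n * x\<rfloor> + 1"
  proof (rule ceiling_unique)
    have "real_of_int \<lfloor>2^n * x\<rfloor> \<noteq> 2^n * x" using ni by (metis Ints_of_int)
    then show "real_of_int (\<lfloor>2^n * x\<rfloor> + 1) - 1 < 2^n * x" by (simp add: order.not_eq_order_implies_strict)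
    show "2^n * x \<le> real_of_int (\<lfloor>2^n * x\<rfloor> + 1)" by linarith
  qed
  then show ?thesis using n by (simp add: cdig_def bdig_def)
qed

lemma normal2_beta:
  assumes xn: "x \<in> normal2" and n: "n \<ge> 1"
  shows "beta x n = bdig x n"
proof -
  have "0 < x" "x \<le> 1" using normal2_pos[OF xn] normal2_01[OF xn] by auto
  then show ?thesis using beta_eq_cdig normal2_cdig[OF xn n] by simp
qed


definition S1 :: "real \<Rightarrow> nat set" where "S1 x = {n. 1 \<le> n \<and> bdig x n = 1}"
definition pp :: "real \<Rightarrow> nat \<Rightarrow> nat" where "pp x k = enumerate (S1 x) k"
definition gap :: "real \<Rightarrow> nat \<Rightarrow> nat" where "gap x k = pp x (Suc k) - pp x k"
definition W :: "nat \<Rightarrow> nat list" where "W j = 1 # replicate j 0 @ [1]"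

lemma W_len: "length (W j) = j + 2" by (simp add: W_def)
lemma W_ok: "W j \<noteq> []" "set (W j) \<subseteq> {0,1}" by (auto simp: W_def)
lemma W_nth: "t < j + 2 \<Longrightarrow> W j ! t = (if t = 0 \<or> t = j + 1 then 1 else 0)"
  by (auto simp: W_def nth_Cons nth_append split: nat.splits)

context
  fixes x :: real
  assumes xn: "x \<in> normal2"
begin

lemma S1_inf: "infinite (S1 x)"
proof
  assume "finite (S1 x)"
  then obtain n where n: "\<forall>s\<in>S1 x. s \<le> n" using finite_nat_set_iff_bounded_le by blast
  from normal2_digits[OF xn, of 1 n] obtain m where "m > n" "bdig x m = 1" by auto
  then have "m \<in> S1 x" by (simp add: S1_def)
  with n \<open>m > n\<close> show False by auto
qed

lemma pp_in: "pp x k \<in> S1 x"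
  unfolding pp_def using enumerate_in_set[OF S1_inf] .

lemma pp_ge1: "1 \<le> pp x k" and pp_one: "bdig x (pp x k) = 1"
  using pp_in[of k] by (auto simp: S1_def)

lemma pp_mono: "strict_mono (pp x)"
  unfolding strict_mono_def pp_def using enumerate_mono[OF _ S1_inf] by blast

lemma pp_less_iff: "pp x a < pp x b \<longleftrightarrow> a < b"
  using pp_mono by (simp add: strict_mono_less)

lemma pp_le_iff: "pp x a \<le> pp x b \<longleftrightarrow> a \<le> b"
  using pp_mono by (simp add: strict_mono_less_eq)

lemma pp_next: "s \<in> S1 x \<Longrightarrow> pp x k < s \<Longrightarrow> pp x (Suc k) \<le> s"
  unfolding pp_def enumerate_Suc''[OF S1_inf] by (rule Least_le) simp

lemma pp_surj: "s \<in> S1 x \<Longrightarrow> \<exists>k. pp x k = s"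
  unfolding pp_def by (rule enumerate_Ex[OF S1_inf])

lemma gap_pos: "pp x (Suc k) = pp x k + gap x k" "gap x k \<ge> 1"
  using pp_less_iff[of k "Suc k"] by (auto simp: gap_def)

lemma between_zero: 
  assumes "pp x k < s" "s < pp x (Suc k)"
  shows "bdig x s = 0"
proof -
  have "s \<notin> S1 x" using pp_next[of s k] assms by auto
  moreover have "1 \<le> s" using pp_ge1[of k] assms by simp
  ultimately have "bdig x s \<noteq> 1" by (simp add: S1_def)
  then show ?thesis using bdig_le1[of x s] by linarith
qed

lemma ones_image: "{i\<in>{1..pp x K}. bdig x i = 1} = pp x ` {..K}"
proof
  show "{i\<in>{1..pp x K}. bdig x i = 1} \<subseteq> pp x ` {..K}"
  proof
    fix i assume i: "i \<in> {i\<in>{1..pp x K}. bdig x i = 1}"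
    then have "i \<in> S1 x" by (simp add: S1_def)
    then obtain k where k: "pp x k = i" using pp_surj by blast
    then have "k \<le> K" using i pp_le_iff[of k K] by simp
    with k show "i \<in> pp x ` {..K}" by auto
  qed
  show "pp x ` {..K} \<subseteq> {i\<in>{1..pp x K}. bdig x i = 1}"
    using pp_ge1 pp_one pp_le_iff by auto
qed

lemma ones_count: "cnt x [1] (pp x K) = K + 1"
proof -
  have "{i\<in>{1..pp x K}. win x [1] i} = {i\<in>{1..pp x K}. bdig x i = 1}"
    by (simp add: win_def)
  also have "\<dots> = pp x ` {..K}" by (rule ones_image)
  finally have "cnt x [1] (pp x K) = card (pp x ` {..K})" by (simp add: cnt_def)
  also have "\<dots> = K + 1"
    using card_image[OF strict_mono_imp_inj_on[OF pp_mono], of "{..K}"] by simp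
  finally show ?thesis .
qed

lemma gap_win_image: "pp x ` {k\<in>{..K}. gap x k = j + 1} = {i\<in>{1..pp x K}. win x (W j) i}"
proof
  show "pp x ` {k\<in>{..K}. gap x k = j + 1} \<subseteq> {i\<in>{1..pp x K}. win x (W j) i}"
  proof
    fix i assume "i \<in> pp x ` {k\<in>{..K}. gap x k = j + 1}"
    then obtain k where k: "k \<le> K" "gap x k = j + 1" "i = pp x k" by auto
    have nx: "pp x (Suc k) = i + j + 1" using gap_pos[of k] k by simp
    have "win x (W j) i" unfolding win_def W_len
    proof (intro allI impI)
      fix t assume t: "t < j + 2"
      show "bdig x (i + t) = W j ! t"
      proof (cases "t = 0 \<or> t = j + 1")
        case True
        then show ?thesis using W_nth[OF t] pp_one[of k] pp_one[of "Suc k"] k nx by auto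
      next
        case False
        then have "pp x k < i + t" "i + t < pp x (Suc k)" using k nx t by auto
        then show ?thesis using between_zero W_nth[OF t] False by simp
      qed
    qed
    moreover have "1 \<le> i" "i \<le> pp x K" using pp_ge1 k pp_le_iff by auto
    ultimately show "i \<in> {i\<in>{1..pp x K}. win x (W j) i}" by simp
  qed
  show "{i\<in>{1..pp x K}. win x (W j) i} \<subseteq> pp x ` {k\<in>{..K}. gap x k = j + 1}"
  proof
    fix i assume i: "i \<in> {i\<in>{1..pp x K}. win x (W j) i}"
    then have w: "bdig x (i + t) = W j ! t" if "t < j + 2" for t
      using that by (simp add: win_def W_len)
    have "bdig x i = 1" using w[of 0] W_nth[of 0 j] by simp
    then have "i \<in> S1 x" using i by (simp add: S1_def)
    then obtain k where k: "pp x k = i" using pp_surj by blast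
    have kK: "k \<le> K" using i k pp_le_iff[of k K] by simp
    have one: "bdig x (i + j + 1) = 1" using w[of "j+1"] W_nth[of "j+1" j] by simp
    then have inS: "i + j + 1 \<in> S1 x" by (simp add: S1_def)
    have le: "pp x (Suc k) \<le> i + j + 1" using pp_next[OF inS] k by simp
    have ge: "i + j + 1 \<le> pp x (Suc k)"
    proof (rule ccontr)
      assume "\<not> i + j + 1 \<le> pp x (Suc k)"
      then have lt: "pp x (Suc k) < i + j + 1" by simp
      have gt: "i < pp x (Suc k)" using k pp_less_iff[of k "Suc k"] by simp
      define t where "t = pp x (Suc k) - i"
      have t: "t < j + 2" "t \<noteq> 0" "t \<noteq> j + 1" "i + t = pp x (Suc k)" using lt gt by (auto simp: t_def)
      have "bdig x (i + t) = 0" using w[OF t(1)] W_nth[OF t(1)] t(2,3) by simp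
      then show False using pp_one[of "Suc k"] t(4) by simp
    qed
    have "gap x k = j + 1" using le ge k gap_pos[of k] by simp
    with kK k show "i \<in> pp x ` {k\<in>{..K}. gap x k = j + 1}" by auto
  qed
qed

lemma gap_count: "card {k\<in>{..K}. gap x k = j + 1} = cnt x (W j) (pp x K)"
proof -
  have "card {k\<in>{..K}. gap x k = j + 1} = card (pp x ` {k\<in>{..K}. gap x k = j + 1})"
    using card_image[OF strict_mono_imp_inj_on[OF pp_mono], of "{k\<in>{..K}. gap x k = j + 1}"] by simp
  also have "\<dots> = cnt x (W j) (pp x K)" unfolding gap_win_image cnt_def ..
  finally show ?thesis .
qed

lemma rho_beta: "rho (beta x) k = (if 1 \<le> k then (if even (pp x (k - 1)) then 1 else 0) else 0)"
proof -
  have "{n. 1 \<le> n \<and> beta x n = 1} = S1 x"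
    using normal2_beta[OF xn] by (auto simp: S1_def)
  then show ?thesis using S1_inf by (simp add: rho_def pp_def Let_def)
qed

end


lemma sum_odd_closed: "(\<Sum>t<T. 1 / (2::real)^(2*t+1+2)) = (1/6) * (1 - (1/4)^T)"
proof (induction T)
  case (Suc T)
  have e: "(2::real)^(2*T+1+2) = 8 * 4^T" by (simp add: power_add power_mult)
  have "(\<Sum>t<Suc T. 1 / (2::real)^(2*t+1+2)) = (1/6) * (1 - (1/4)^T) + 1 / (8 * 4^T)"
    using Suc.IH e by simp
  also have "\<dots> = (1/6) * (1 - (1/4)^Suc T)" by (simp add: field_simps power_one_over)
  finally show ?case .
qed simp

lemma sum_even_closed: "(\<Sum>t<T. 1 / (2::real)^(2*t+2)) = (1/3) * (1 - (1/4)^T)"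
proof (induction T)
  case (Suc T)
  have e: "(2::real)^(2*T+2) = 4 * 4^T" by (simp add: power_add power_mult)
  have "(\<Sum>t<Suc T. 1 / (2::real)^(2*t+2)) = (1/3) * (1 - (1/4)^T) + 1 / (4 * 4^T)"
    using Suc.IH e by simp
  also have "\<dots> = (1/3) * (1 - (1/4)^Suc T)" by (simp add: field_simps power_one_over)
  finally show ?case .
qed simp

definition Ev :: "real \<Rightarrow> nat \<Rightarrow> nat" where "Ev x K = card {k\<in>{..K}. even (gap x k)}"

context
  fixes x :: real
  assumes xn: "x \<in> normal2"
begin

lemma card_split_even: "Ev x K + card {k\<in>{..K}. odd (gap x k)} = K + 1"
proof -
  have "card ({k\<in>{..K}. even (gap x k)} \<union> {k\<in>{..K}. odd (gap x k)}) =
        card {k\<in>{..K}. even (gap x k)} + card {k\<in>{..K}. odd (gap x k)}"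
    by (rule card_Un_disjoint) auto
  moreover have "{k\<in>{..K}. even (gap x k)} \<union> {k\<in>{..K}. odd (gap x k)} = {..K}" by auto
  ultimately show ?thesis by (simp add: Ev_def)
qed

lemma card_UN_gaps:
  fixes T :: nat and f :: "nat \<Rightarrow> nat"
  assumes "\<And>t. P (f t)" "inj f"
  shows "(\<Sum>t<T. card {k\<in>{..K}. gap x k = f t}) \<le> card {k\<in>{..K}. P (gap x k)}"
proof -
  have "(\<Sum>t<T. card {k\<in>{..K}. gap x k = f t}) = card (\<Union>t\<in>{..<T}. {k\<in>{..K}. gap x k = f t})"
  proof (rule card_UN_disjoint[symmetric])
    show "\<forall>i\<in>{..<T}. \<forall>j\<in>{..<T}. i \<noteq> j \<longrightarrow> {k\<in>{..K}. gap x k = f i} \<inter> {k\<in>{..K}. gap x k = f j} = {}"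
      using assms(2) by (auto dest: injD)
    show "finite {..<T}" by simp
    show "\<forall>i\<in>{..<T}. finite {k\<in>{..K}. gap x k = f i}" by simp
  qed
  also have "\<dots> \<le> card {k\<in>{..K}. P (gap x k)}"
    by (rule card_mono) (use assms(1) in auto)
  finally show ?thesis .
qed

lemma ev_lower: "(\<Sum>t<T. cnt x (W (2*t+1)) (pp x K)) \<le> Ev x K"
proof -
  have "(\<Sum>t<T. cnt x (W (2*t+1)) (pp x K)) = (\<Sum>t<T. card {k\<in>{..K}. gap x k = 2*t+1 + 1})"
    using gap_count[OF xn] by simp
  also have "\<dots> \<le> Ev x K" unfolding Ev_def
    by (rule card_UN_gaps[where f="\<lambda>t. 2*t+1+1"]) (auto simp: inj_def)
  finally show ?thesis .
qed

lemma od_lower: "(\<Sum>t<T. cnt x (W (2*t)) (pp x K)) + Ev x K \<le> K + 1"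
proof -
  have "(\<Sum>t<T. cnt x (W (2*t)) (pp x K)) = (\<Sum>t<T. card {k\<in>{..K}. gap x k = 2*t + 1})"
    using gap_count[OF xn] by simp
  also have "\<dots> \<le> card {k\<in>{..K}. odd (gap x k)}"
    by (rule card_UN_gaps[where f="\<lambda>t. 2*t+1"]) (auto simp: inj_def)
  finally show ?thesis using card_split_even[of K] by linarith
qed

lemma freq_pp:
  assumes "w \<noteq> []" "set w \<subseteq> {0,1}"
  shows "(\<lambda>K. real (cnt x w (pp x K)) / real (pp x K)) \<longlonglongrightarrow> 1 / 2^length w"
  using LIMSEQ_subseq_LIMSEQ[OF normal2_freq[OF xn assms] pp_mono[OF xn]] by (simp add: comp_def)

lemma ones_pp: "(\<lambda>K. real (K + 1) / real (pp x K)) \<longlonglongrightarrow> 1/2"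
  using freq_pp[of "[1]"] ones_count[OF xn] by simp

lemma pp_pos: "0 < real (pp x K)" using pp_ge1[OF xn, of K] by simp

lemma Ev_pp: "(\<lambda>K. real (Ev x K) / real (pp x K)) \<longlonglongrightarrow> 1/6"
proof (rule order_tendstoI)
  fix a :: real assume a: "a < 1/6"
  obtain T where T: "(1/4::real)^T < 1 - 6*a" using real_arch_pow_inv[of "1 - 6*a" "1/4"] a by auto
  have lim: "(\<lambda>K. \<Sum>t<T. real (cnt x (W (2*t+1)) (pp x K)) / real (pp x K)) \<longlonglongrightarrow> (\<Sum>t<T. 1 / 2^(2*t+1+2))"
    by (intro tendsto_sum freq_pp[THEN tendsto_eq_rhs] W_ok) (simp add: W_len)
  have "a < (\<Sum>t<T. 1 / (2::real)^(2*t+1+2))" unfolding sum_odd_closed using T by simp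
  from order_tendstoD(1)[OF lim this]
  show "\<forall>\<^sub>F K in sequentially. a < real (Ev x K) / real (pp x K)"
  proof (rule eventually_mono)
    fix K assume "a < (\<Sum>t<T. real (cnt x (W (2*t+1)) (pp x K)) / real (pp x K))"
    also have "(\<Sum>t<T. real (cnt x (W (2*t+1)) (pp x K)) / real (pp x K)) = 
       real (\<Sum>t<T. cnt x (W (2*t+1)) (pp x K)) / real (pp x K)" by (simp add: sum_divide_distrib)
    also have "\<dots> \<le> real (Ev x K) / real (pp x K)"
      using ev_lower[where T=T and K=K] pp_pos[of K] by (intro divide_right_mono of_nat_mono) auto
    finally show "a < real (Ev x K) / real (pp x K)" .
  qed
next
  fix a :: real assume a: "1/6 < a"
  obtain T where T: "(1/4::real)^T < 3*a - 1/2" using real_arch_pow_inv[of "3*a - 1/2" "1/4"] a by auto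
  have lim: "(\<lambda>K. real (K + 1) / real (pp x K) - (\<Sum>t<T. real (cnt x (W (2*t)) (pp x K)) / real (pp x K)))
      \<longlonglongrightarrow> 1/2 - (\<Sum>t<T. 1 / 2^(2*t+2))"
    by (intro tendsto_diff ones_pp tendsto_sum freq_pp[THEN tendsto_eq_rhs] W_ok) (simp add: W_len)
  have "1/2 - (\<Sum>t<T. 1 / (2::real)^(2*t+2)) < a" unfolding sum_even_closed using T by (simp add: right_diff_distrib)
  from order_tendstoD(2)[OF lim this]
  show "\<forall>\<^sub>F K in sequentially. real (Ev x K) / real (pp x K) < a"
  proof (rule eventually_mono)
    fix K assume h: "real (K + 1) / real (pp x K) - (\<Sum>t<T. real (cnt x (W (2*t)) (pp x K)) / real (pp x K)) < a"
    have "real (Ev x K) \<le> real (K + 1) - real (\<Sum>t<T. cnt x (W (2*t)) (pp x K))"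
      using od_lower[where T=T and K=K] by linarith
    then have "real (Ev x K) / real (pp x K) \<le> (real (K + 1) - real (\<Sum>t<T. cnt x (W (2*t)) (pp x K))) / real (pp x K)"
      using pp_pos[of K] by (intro divide_right_mono) auto
    also have "\<dots> = real (K + 1) / real (pp x K) - (\<Sum>t<T. real (cnt x (W (2*t)) (pp x K)) / real (pp x K))"
      by (simp add: diff_divide_distrib sum_divide_distrib)
    finally show "real (Ev x K) / real (pp x K) < a" using h by linarith
  qed
qed

lemma Ev_K: "(\<lambda>K. real (Ev x K) / real (K + 1)) \<longlonglongrightarrow> 1/3"
proof -
  have "(\<lambda>K. (real (Ev x K) / real (pp x K)) / (real (K + 1) / real (pp x K))) \<longlonglongrightarrow> (1/6) / (1/2)"
    by (rule tendsto_divide[OF Ev_pp ones_pp]) simp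
  moreover have "(real (Ev x K) / real (pp x K)) / (real (K + 1) / real (pp x K)) = real (Ev x K) / real (K + 1)" for K
    using pp_pos[of K] by (simp add: field_simps)
  ultimately show ?thesis by simp
qed

end


context
  fixes x :: real
  assumes xn: "x \<in> normal2"
begin

lemma c_le1: "rho (beta x) k \<le> 1"
  by (simp add: rho_beta[OF xn])

lemma c_0: "rho (beta x) 0 = 0"
  by (simp add: rho_beta[OF xn])

lemma eqset: "{k\<in>{1..Suc K}. rho (beta x) k = rho (beta x) (Suc k)} = Suc ` {k\<in>{..K}. even (gap x k)}"
proof -
  have e: "rho (beta x) (Suc k) = rho (beta x) (Suc (Suc k)) \<longleftrightarrow> even (gap x k)" for k
    using gap_pos(1)[OF xn, of k] by (simp add: rho_beta[OF xn])
  show ?thesis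
  proof
    show "{k\<in>{1..Suc K}. rho (beta x) k = rho (beta x) (Suc k)} \<subseteq> Suc ` {k\<in>{..K}. even (gap x k)}"
    proof
      fix k assume k: "k \<in> {k\<in>{1..Suc K}. rho (beta x) k = rho (beta x) (Suc k)}"
      then obtain k' where k': "k = Suc k'" by (cases k) auto
      show "k \<in> Suc ` {k\<in>{..K}. even (gap x k)}" using k e[of k'] unfolding k' by auto
    qed
    show "Suc ` {k\<in>{..K}. even (gap x k)} \<subseteq> {k\<in>{1..Suc K}. rho (beta x) k = rho (beta x) (Suc k)}"
      using e by auto
  qed
qed

lemma EqC: "(\<lambda>N. real (card {k\<in>{1..N}. rho (beta x) k = rho (beta x) (Suc k)}) / real N) \<longlonglongrightarrow> 1/3"
proof -
  have "card {k\<in>{1..Suc K}. rho (beta x) k = rho (beta x) (Suc k)} = Ev x K" for K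
    unfolding eqset Ev_def by (simp add: card_image)
  then have "(\<lambda>N. real (card {k\<in>{1..Suc N}. rho (beta x) k = rho (beta x) (Suc k)}) / real (Suc N)) \<longlonglongrightarrow> 1/3"
    using Ev_K[OF xn] by simp
  then show ?thesis by (rule filterlim_sequentially_Suc[THEN iffD1])
qed

lemma c_inf0: "infinite {n. rho (beta x) n = 0}"
proof
  assume "finite {n. rho (beta x) n = 0}"
  then obtain n0 where n0: "\<forall>n\<in>{n. rho (beta x) n = 0}. n \<le> n0" using finite_nat_set_iff_bounded_le by blast
  have one: "rho (beta x) k = 1" if "k > n0" for k
  proof -
    have "rho (beta x) k \<noteq> 0" using n0 that by auto
    then show ?thesis using c_le1[of k] by linarith
  qed
  have sub: "{n0+1..N} \<subseteq> {k\<in>{1..N}. rho (beta x) k = rho (beta x) (Suc k)}" for N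
    using one by auto
  have ge: "real N - real n0 \<le> real (card {k\<in>{1..N}. rho (beta x) k = rho (beta x) (Suc k)})" for N
  proof -
    have "card {n0+1..N} \<le> card {k\<in>{1..N}. rho (beta x) k = rho (beta x) (Suc k)}"
      by (rule card_mono[OF _ sub]) simp
    then show ?thesis by simp
  qed
  have lim1: "(\<lambda>N. 1 - real n0 / real N) \<longlonglongrightarrow> 1 - 0"
    by (intro tendsto_diff tendsto_const lim_const_over_n)
  have "\<exists>N0. \<forall>N\<ge>N0. 1 - real n0 / real N \<le> real (card {k\<in>{1..N}. rho (beta x) k = rho (beta x) (Suc k)}) / real N"
  proof (intro exI allI impI)
    fix N :: nat assume "N \<ge> 1"
    then have "1 - real n0 / real N = (real N - real n0) / real N" by (simp add: field_simps)
    also have "\<dots> \<le> real (card {k\<in>{1..N}. rho (beta x) k = rho (beta x) (Suc k)}) / real N"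
      using ge[of N] by (intro divide_right_mono) auto
    finally show "1 - real n0 / real N \<le> real (card {k\<in>{1..N}. rho (beta x) k = rho (beta x) (Suc k)}) / real N" .
  qed
  from LIMSEQ_le[OF lim1 EqC this] show False by simp
qed

lemma c_summable: "summable (\<lambda>n. real (rho (beta x) n) / 2^n)"
proof (rule summable_comparison_test'[where g="\<lambda>n. (1/2)^n"])
  show "summable (\<lambda>n. (1/2::real)^n)" by (rule summable_geometric) simp
  fix n show "norm (real (rho (beta x) n) / 2^n) \<le> (1/2)^n"
    using c_le1[of n] by (simp add: power_one_over divide_right_mono)
qed

lemma R_eq: "R x = (\<Sum>n. real (rho (beta x) n) / 2^n)"
  using normal2_pos[OF xn] by (simp add: R_def)

lemma R_bdig: "n \<ge> 1 \<Longrightarrow> bdig (R x) n = rho (beta x) n"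
  using zeros_expansion_digits[of "rho (beta x)" "R x" n] c_le1 c_inf0 summable_sums[OF c_summable]
  unfolding R_eq by blast

lemma R_01: "0 \<le> R x \<and> R x \<le> 1"
proof -
  define g where "g = (\<lambda>k. real (rho (beta x) (k+1)) / 2^(k+1))"
  have nn: "0 \<le> g k" for k by (simp add: g_def)
  have le: "g k \<le> 1 / 2^(k+1)" for k unfolding g_def using c_le1[of "k+1"] by (intro divide_right_mono) auto
  have "(\<Sum>n. real (rho (beta x) (Suc n)) / 2^(Suc n)) = R x - 0"
    unfolding R_eq using suminf_split_head[OF c_summable] c_0 by simp
  then have "R x = suminf g" by (simp add: g_def)
  then show ?thesis using half_dominated(2)[OF nn le] suminf_nonneg[OF half_dominated(1)[OF nn le] nn] by simp
qed

lemma R_not_normal: "R x \<notin> normal2"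
proof
  assume yn: "R x \<in> normal2"
  let ?y = "R x"
  have l0: "(\<lambda>N. real (cnt ?y [0,0] N) / real N) \<longlonglongrightarrow> 1/4"
    using normal2_freq[OF yn, of "[0,0]"] by simp
  have l1: "(\<lambda>N. real (cnt ?y [1,1] N) / real N) \<longlonglongrightarrow> 1/4"
    using normal2_freq[OF yn, of "[1,1]"] by simp
  have eq: "card {k\<in>{1..N}. rho (beta x) k = rho (beta x) (Suc k)} = cnt ?y [0,0] N + cnt ?y [1,1] N" for N
  proof -
    have w: "win ?y [a, a] k \<longleftrightarrow> bdig ?y k = a \<and> bdig ?y (Suc k) = a" for a k
      by (auto simp: win_def less_Suc_eq nth_Cons split: nat.splits)
    have "{k\<in>{1..N}. rho (beta x) k = rho (beta x) (Suc k)} = {k\<in>{1..N}. win ?y [0,0] k} \<union> {k\<in>{1..N}. win ?y [1,1] k}"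
    proof (intro set_eqI iffI)
      fix k assume k: "k \<in> {k\<in>{1..N}. rho (beta x) k = rho (beta x) (Suc k)}"
      then have "bdig ?y k = bdig ?y (Suc k)" using R_bdig[of k] R_bdig[of "Suc k"] by auto
      moreover have "bdig ?y k \<le> 1" by (rule bdig_le1)
      ultimately show "k \<in> {k\<in>{1..N}. win ?y [0,0] k} \<union> {k\<in>{1..N}. win ?y [1,1] k}"
        using k w by auto
    next
      fix k assume "k \<in> {k\<in>{1..N}. win ?y [0,0] k} \<union> {k\<in>{1..N}. win ?y [1,1] k}"
      then show "k \<in> {k\<in>{1..N}. rho (beta x) k = rho (beta x) (Suc k)}"
        using w R_bdig[of k] R_bdig[of "Suc k"] by auto
    qed
    moreover have "card ({k\<in>{1..N}. win ?y [0,0] k} \<union> {k\<in>{1..N}. win ?y [1,1] k}) = cnt ?y [0,0] N + cnt ?y [1,1] N"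
      unfolding cnt_def by (rule card_Un_disjoint) (auto simp: w)
    ultimately show ?thesis by simp
  qed
  have "(\<lambda>N. real (cnt ?y [0,0] N) / real N + real (cnt ?y [1,1] N) / real N) \<longlonglongrightarrow> 1/4 + 1/4"
    by (rule tendsto_add[OF l0 l1])
  then have "(\<lambda>N. real (card {k\<in>{1..N}. rho (beta x) k = rho (beta x) (Suc k)}) / real N) \<longlonglongrightarrow> 1/2"
    unfolding eq by (simp add: add_divide_distrib)
  with EqC have "(1/2::real) = 1/3" using LIMSEQ_unique by blast
  then show False by simp
qed

end

lemma conj1: "R ` normal2 \<subseteq> {0..1} - normal2"
  using R_01 R_not_normal by auto


lemma cdig_meas[measurable]: "(\<lambda>x. cdig x n) \<in> borel \<rightarrow>\<^sub>M count_space UNIV"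
proof -
  have "(\<lambda>x::real. \<lceil>2^n*x\<rceil>) \<in> borel \<rightarrow>\<^sub>M count_space UNIV" by measurable
  then show ?thesis unfolding cdig_def
    by (rule measurable_compose[where g="\<lambda>k. if n = 0 then 0 else nat ((k - 1) mod 2)"]) simp
qed

definition Rm :: "real \<Rightarrow> real" where
  "Rm x = (if x = 0 then 2/3 else
     (\<Sum>n. (if 1 \<le> n \<and> (\<exists>m. even m \<and> cdig x m = 1 \<and> (\<Sum>i\<in>{1..<m}. real (cdig x i)) = real (n - 1))
           then 1 else 0) / 2^n))"

lemma Rm_meas: "Rm \<in> borel_measurable borel"
  unfolding Rm_def by measurable

lemma enum_below:
  fixes S :: "nat set"
  assumes inf: "infinite S"
  shows "{s\<in>S. s < enumerate S j} = enumerate S ` {..<j}"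
proof
  show "{s\<in>S. s < enumerate S j} \<subseteq> enumerate S ` {..<j}"
  proof
    fix s assume s: "s \<in> {s\<in>S. s < enumerate S j}"
    then obtain k where k: "enumerate S k = s" using enumerate_Ex[OF inf] by blast
    then have "k < j" using s enumerate_mono_iff[OF inf, of k j] by simp
    with k show "s \<in> enumerate S ` {..<j}" by auto
  qed
  show "enumerate S ` {..<j} \<subseteq> {s\<in>S. s < enumerate S j}"
    using enumerate_in_set[OF inf] enumerate_mono_iff[OF inf] by auto
qed

lemma enum_char:
  fixes S :: "nat set"
  assumes inf: "infinite S"
  shows "(m \<in> S \<and> card {s\<in>S. s < m} = j) \<longleftrightarrow> enumerate S j = m"
proof
  assume "enumerate S j = m"
  then show "m \<in> S \<and> card {s\<in>S. s < m} = j"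
    using enum_below[OF inf, of j] enumerate_in_set[OF inf, of j]
      card_image[OF strict_mono_imp_inj_on[of "enumerate S" "{..<j}"]] inf
    by (simp add: strict_mono_def)
next
  assume m: "m \<in> S \<and> card {s\<in>S. s < m} = j"
  then obtain k where k: "enumerate S k = m" using enumerate_Ex[OF inf] by blast
  have "card {s\<in>S. s < m} = k"
    using enum_below[OF inf, of k] k
      card_image[OF strict_mono_imp_inj_on[of "enumerate S" "{..<k}"]] inf
    by (simp add: strict_mono_def)
  with m k show "enumerate S j = m" by simp
qed

lemma of_nat_ind: "real (if P then 1 else 0) = (if P then 1 else 0)" by simp

lemma R_eq_Rm:
  assumes "0 \<le> x" "x \<le> 1"
  shows "R x = Rm x"
proof (cases "x = 0")
  case True then show ?thesis by (simp add: R_def Rm_def)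
next
  case False
  then have x: "0 < x" "x \<le> 1" using assms by auto
  note cp = cdig_props[OF x]
  define S where "S = {n. 1 \<le> n \<and> cdig x n = 1}"
  have S_eq: "S = {n. cdig x n = 1}" using cp(1) by (auto simp: S_def) (metis One_nat_def Suc_leI neq0_conv zero_neq_one)
  have inf: "infinite S" using cp(3) S_eq by simp
  have key: "rho (beta x) n = (if 1 \<le> n \<and> (\<exists>m. even m \<and> cdig x m = 1 \<and> (\<Sum>i\<in>{1..<m}. real (cdig x i)) = real (n - 1)) then 1 else 0)" for n
  proof -
    have cnt: "(\<Sum>i\<in>{1..<m}. real (cdig x i)) = real (card {s\<in>S. s < m})" for m
    proof -
      have "(\<Sum>i\<in>{1..<m}. real (cdig x i)) = (\<Sum>i\<in>{1..<m}. if cdig x i = 1 then 1 else 0)"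
        using cp(2) by (intro sum.cong refl) (metis le_neq_implies_less less_one of_nat_0 of_nat_1)
      also have "\<dots> = real (card {i\<in>{1..<m}. cdig x i = 1})"
        by (simp add: sum.If_cases Int_def)
      also have "{i\<in>{1..<m}. cdig x i = 1} = {s\<in>S. s < m}" by (auto simp: S_def)
      finally show ?thesis .
    qed
    have ex: "(\<exists>m. even m \<and> cdig x m = 1 \<and> (\<Sum>i\<in>{1..<m}. real (cdig x i)) = real j) \<longleftrightarrow> even (enumerate S j)" for j
    proof
      assume "\<exists>m. even m \<and> cdig x m = 1 \<and> (\<Sum>i\<in>{1..<m}. real (cdig x i)) = real j"
      then obtain m where m: "even m" "cdig x m = 1" "(\<Sum>i\<in>{1..<m}. real (cdig x i)) = real j" by auto
      have "m \<in> S \<and> card {s\<in>S. s < m} = j" using m cnt[of m] S_eq by simp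
      then have "enumerate S j = m" using enum_char[OF inf] by blast
      then show "even (enumerate S j)" using m by simp
    next
      assume "even (enumerate S j)"
      moreover have "enumerate S j \<in> S \<and> card {s\<in>S. s < enumerate S j} = j"
        using enum_char[OF inf] by blast
      ultimately show "\<exists>m. even m \<and> cdig x m = 1 \<and> (\<Sum>i\<in>{1..<m}. real (cdig x i)) = real j"
        using cnt S_eq by (intro exI[of _ "enumerate S j"]) auto
    qed
    show ?thesis
      unfolding beta_eq_cdig[OF x] rho_def Let_def S_def[symmetric] using inf ex[of "n - 1"] by simp
  qed
  have t: "real (rho (beta x) n) = (if 1 \<le> n \<and> (\<exists>m. even m \<and> cdig x m = 1 \<and> (\<Sum>i\<in>{1..<m}. real (cdig x i)) = real (n - 1)) then 1 else 0)" for n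
    unfolding key[of n] by (rule of_nat_ind)
  show ?thesis using False unfolding R_def Rm_def t by simp
qed

lemma conj2: "R \<in> borel_measurable (restrict_space borel {0..1})"
proof -
  have "Rm \<in> borel_measurable (restrict_space borel {0..1})"
    by (rule measurable_restrict_space1[OF Rm_meas])
  moreover have "\<forall>x\<in>space (restrict_space borel {0..1::real}). R x = Rm x"
    using R_eq_Rm by auto
  ultimately show ?thesis using measurable_cong[of "restrict_space borel {0..1::real}" R Rm] by simp
qed


lemma bdig_meas[measurable]: "(\<lambda>x. bdig x n) \<in> borel \<rightarrow>\<^sub>M count_space UNIV"
proof -
  have "(\<lambda>x::real. \<lfloor>2^n*x\<rfloor>) \<in> borel \<rightarrow>\<^sub>M count_space UNIV" by measurable
  then show ?thesis unfolding bdig_def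
    by (rule measurable_compose[where g="\<lambda>k. nat (k mod 2)"]) simp
qed

lemma affine_half:
  fixes B :: "real set" and e :: real
  assumes [measurable]: "B \<in> sets borel"
  shows "emeasure lborel {x. 2*x - e \<in> B} = emeasure lborel B / 2"
proof -
  have "emeasure lborel B = (\<integral>\<^sup>+x. indicator B x \<partial>lborel)" by simp
  also have "\<dots> = ennreal \<bar>2\<bar> * (\<integral>\<^sup>+x. indicator B (-e + 2 * x) \<partial>lborel)"
    by (rule nn_integral_real_affine) auto
  also have "(\<lambda>x. indicator B (-e + 2 * x) :: ennreal) = indicator {x. 2*x - e \<in> B}"
    by (auto simp: indicator_def)
  also have "(\<integral>\<^sup>+x. indicator {x. 2*x - e \<in> B} x \<partial>lborel) = emeasure lborel {x. 2*x - e \<in> B}"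
    by (rule nn_integral_indicator) measurable
  finally have "emeasure lborel B = 2 * emeasure lborel {x. 2*x - e \<in> B}" by simp
  then show ?thesis
    by (simp add: ennreal_divide_times mult.commute[of 2] ennreal_mult_divide_eq)
qed

lemma digit_shift:
  fixes x :: real and e :: nat
  assumes e: "e \<le> 1" and y: "0 \<le> 2*x - e" "2*x - e < 1"
  shows "0 \<le> x" "x < 1" "bdig x 1 = e" "\<And>d. d \<ge> 1 \<Longrightarrow> bdig x (Suc d) = bdig (2*x - e) d"
proof -
  show "0 \<le> x" "x < 1" using y e by auto
  have "\<lfloor>2*x\<rfloor> = int e" using y by (intro floor_unique) auto
  then show "bdig x 1 = e" using e by (auto simp: bdig_def)
  fix d :: nat assume d: "d \<ge> 1"
  have "2^Suc d * x = 2^d * (2*x - e) + of_int (int (2^d * e))" by (simp add: algebra_simps)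
  then have "\<lfloor>2^Suc d * x\<rfloor> = \<lfloor>2^d * (2*x - e)\<rfloor> + int (2^d * e)"
    by (metis floor_add_int)
  moreover have "even (int (2^d * e))" using d by (cases d) auto
  ultimately show "bdig x (Suc d) = bdig (2*x - e) d"
    unfolding bdig_def by (metis (no_types, lifting) even_iff_mod_2_eq_zero mod_add_right_eq add.right_neutral)
qed

lemma digit_split:
  fixes x :: real
  assumes "0 \<le> x" "x < 1"
  shows "bdig x 1 \<le> 1" "0 \<le> 2*x - bdig x 1" "2*x - bdig x 1 < 1"
proof -
  show "bdig x 1 \<le> 1" by (rule bdig_le1)
  have f: "\<lfloor>2*x\<rfloor> \<in> {0,1}" using assms by (auto simp: floor_eq_iff)
  then have "real (bdig x 1) = real_of_int \<lfloor>2*x\<rfloor>" by (auto simp: bdig_def)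
  then show "0 \<le> 2*x - bdig x 1" "2*x - bdig x 1 < 1" by linarith+
qed

definition cyl :: "nat set \<Rightarrow> (nat \<Rightarrow> nat) \<Rightarrow> real set" where
  "cyl D v = {x\<in>{0..<1}. \<forall>d\<in>D. bdig x d = v d}"

lemma cyl_meas[measurable]: "finite D \<Longrightarrow> cyl D v \<in> sets borel"
  unfolding cyl_def by measurable

lemma cyl_shift:
  assumes D: "\<forall>d\<in>D. d \<ge> 1" and e: "e \<le> 1"
  shows "cyl D v \<inter> {x. bdig x 1 = e} =
     (if 1 \<in> D \<and> v 1 \<noteq> e then {} else {x. 2*x - e \<in> cyl {d. d \<ge> 1 \<and> Suc d \<in> D} (\<lambda>d. v (Suc d))})"
proof -
  let ?D' = "{d. d \<ge> 1 \<and> Suc d \<in> D}"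
  have *: "x \<in> cyl D v \<and> bdig x 1 = e \<longleftrightarrow> \<not> (1 \<in> D \<and> v 1 \<noteq> e) \<and> 2*x - e \<in> cyl ?D' (\<lambda>d. v (Suc d))" for x
  proof
    assume x: "x \<in> cyl D v \<and> bdig x 1 = e"
    then have x01: "0 \<le> x" "x < 1" by (auto simp: cyl_def)
    note ds = digit_split[OF x01]
    have y: "0 \<le> 2*x - e" "2*x - e < 1" using ds x by auto
    note sh = digit_shift[OF e y]
    show "\<not> (1 \<in> D \<and> v 1 \<noteq> e) \<and> 2*x - e \<in> cyl ?D' (\<lambda>d. v (Suc d))"
      using x y sh(4) by (auto simp: cyl_def)
  next
    assume r: "\<not> (1 \<in> D \<and> v 1 \<noteq> e) \<and> 2*x - e \<in> cyl ?D' (\<lambda>d. v (Suc d))"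
    then have y: "0 \<le> 2*x - e" "2*x - e < 1" by (auto simp: cyl_def)
    note sh = digit_shift[OF e y]
    have "bdig x d = v d" if "d \<in> D" for d
    proof (cases "d = 1")
      case True then show ?thesis using r sh(3) that by auto
    next
      case False
      have "d \<ge> 2" using D that False by force
      then obtain d' where d': "d = Suc d'" "d' \<ge> 1" by (cases d) auto
      then show ?thesis using r sh(4)[of d'] that by (auto simp: cyl_def)
    qed
    then show "x \<in> cyl D v \<and> bdig x 1 = e" using sh by (auto simp: cyl_def)
  qed
  show ?thesis using * by auto
qed

lemma card_shift:
  assumes D: "\<forall>d\<in>D. d \<ge> 1" "finite D"
  shows "card D = card {d. d \<ge> 1 \<and> Suc d \<in> D} + (if 1 \<in> D then 1 else 0)"
proof -
  have "Suc ` {d. d \<ge> 1 \<and> Suc d \<in> D} = D - {1}"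
  proof (intro set_eqI iffI)
    fix d assume "d \<in> D - {1}"
    then obtain d' where "d = Suc d'" "d' \<ge> 1" using D by (cases d) auto
    then show "d \<in> Suc ` {d. d \<ge> 1 \<and> Suc d \<in> D}" using \<open>d \<in> D - {1}\<close> by auto
  qed auto
  then have "card {d. d \<ge> 1 \<and> Suc d \<in> D} = card (D - {1})"
    by (metis card_image inj_Suc inj_on_subset subset_UNIV)
  moreover have "1 \<in> D \<Longrightarrow> card D \<ge> 1" using D(2) card_gt_0_iff[of D] by auto
  ultimately show ?thesis using D(2) by (auto simp: card_Diff_singleton)
qed

lemma cyl_measure:
  assumes "finite D" "D \<subseteq> {1..n}" "\<forall>d\<in>D. v d \<le> 1"
  shows "emeasure lborel (cyl D v) = ennreal ((1/2)^card D)"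
  using assms
proof (induction n arbitrary: D v)
  case 0
  then have "D = {}" by auto
  moreover have "cyl {} v = {0..<1}" by (auto simp: cyl_def)
  ultimately show ?case by simp
next
  case (Suc n)
  let ?D' = "{d. d \<ge> 1 \<and> Suc d \<in> D}" and ?v' = "\<lambda>d. v (Suc d)"
  have D1: "\<forall>d\<in>D. d \<ge> 1" using Suc.prems by auto
  have fin': "finite ?D'" by (rule finite_subset[of _ "{..n}"]) (use Suc.prems in auto)
  have IH: "emeasure lborel (cyl ?D' ?v') = ennreal ((1/2)^card ?D')"
    by (rule Suc.IH) (use Suc.prems fin' in auto)
  have meas': "cyl ?D' ?v' \<in> sets borel" using fin' by measurable
  have half: "emeasure lborel (cyl D v \<inter> {x. bdig x 1 = e}) =
       ennreal (if 1 \<in> D \<and> v 1 \<noteq> e then 0 else (1/2)^card ?D' / 2)" if e: "e \<le> 1" for e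
  proof -
    have "ennreal ((1/2)^card ?D') / 2 = ennreal ((1/2)^card ?D' / 2)"
      using divide_ennreal[of "(1/2)^card ?D'" 2] by simp
    then show ?thesis unfolding cyl_shift[OF D1 e] using affine_half[OF meas', of e] IH by auto
  qed
  have split: "cyl D v = (cyl D v \<inter> {x. bdig x 1 = 0}) \<union> (cyl D v \<inter> {x. bdig x 1 = 1})"
    using bdig_le1 by (auto simp: le_Suc_eq)
  have m01: "cyl D v \<inter> {x. bdig x 1 = e} \<in> sets lborel" for e
    using Suc.prems(1) by measurable
  have "emeasure lborel (cyl D v) = emeasure lborel (cyl D v \<inter> {x. bdig x 1 = 0}) + emeasure lborel (cyl D v \<inter> {x. bdig x 1 = 1})"
    by (subst split, rule plus_emeasure[symmetric]) (use m01 in auto)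
  also have "\<dots> = ennreal ((if 1 \<in> D \<and> v 1 \<noteq> 0 then 0 else (1/2)^card ?D' / 2) + (if 1 \<in> D \<and> v 1 \<noteq> 1 then 0 else (1/2)^card ?D' / 2))"
    using half[of 0] half[of 1] by (subst ennreal_plus) auto
  also have "\<dots> = ennreal ((1/2)^card D)"
  proof (cases "1 \<in> D")
    case True
    have "card D = card ?D' + 1" using card_shift[OF D1 Suc.prems(1)] True by simp
    moreover have "v 1 = 0 \<or> v 1 = 1" using Suc.prems(3) True by auto
    ultimately show ?thesis using True by auto
  next
    case False
    have "card D = card ?D'" using card_shift[OF D1 Suc.prems(1)] False by simp
    then show ?thesis using False by simp
  qed
  finally show ?case .
qed


abbreviation M01 :: "real measure" where "M01 \<equiv> restrict_space lborel {0..<1}"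

lemma M01_space: "space M01 = {0..<1}" by simp

lemma M01_finite: "finite_measure M01"
  by (rule finite_measureI) (simp add: emeasure_restrict_space space_restrict_space)

lemma M01_measure: "A \<subseteq> {0..<1} \<Longrightarrow> measure M01 A = measure lborel A"
  by (rule measure_restrict_space) auto

lemma M01_integrable:
  fixes f :: "real \<Rightarrow> real"
  assumes "f \<in> borel_measurable borel" "\<And>x. \<bar>f x\<bar> \<le> B"
  shows "integrable M01 f"
proof (rule finite_measure.integrable_const_bound[OF M01_finite, where B=B])
  show "AE x in M01. norm (f x) \<le> B" using assms(2) by simp
  have "f \<in> borel_measurable lborel" using assms(1) by simp
  then show "f \<in> borel_measurable M01" by (rule measurable_restrict_space1)
qed

lemma M01_ind: "A \<in> sets borel \<Longrightarrow> A \<subseteq> {0..<1} \<Longrightarrow> integral\<^sup>L M01 (indicator A) = measure lborel A"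
  using M01_measure[of A] by (simp add: Int_absorb2)

definition EE :: "nat list \<Rightarrow> nat \<Rightarrow> real set" where
  "EE w i = {x\<in>{0..<1}. win x w i}"

lemma EE_cyl: "EE w i = cyl {i..<i + length w} (\<lambda>d. w ! (d - i))"
proof -
  have "win x w i \<longleftrightarrow> (\<forall>d\<in>{i..<i + length w}. bdig x d = w ! (d - i))" for x
  proof
    assume "win x w i"
    then show "\<forall>d\<in>{i..<i + length w}. bdig x d = w ! (d - i)"
      unfolding win_def by (metis add_diff_inverse_nat atLeastLessThan_iff less_diff_conv2 not_less add.commute)
  next
    assume h: "\<forall>d\<in>{i..<i + length w}. bdig x d = w ! (d - i)"
    show "win x w i" unfolding win_def
    proof (intro allI impI)
      fix j assume "j < length w" then show "bdig x (i + j) = w ! j" using h[rule_format, of "i+j"] by simp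
    qed
  qed
  then show ?thesis by (auto simp: EE_def cyl_def)
qed

lemma EE_meas[measurable]: "EE w i \<in> sets borel"
  unfolding EE_cyl by (rule cyl_meas) simp

lemma EE_sub: "EE w i \<subseteq> {0..<1}" by (auto simp: EE_def)

definition pwg :: "nat list \<Rightarrow> real" where "pwg w = ((1/2::real)^length w)"

lemma pw_bounds: "0 \<le> pwg w" "pwg w \<le> 1" by (auto simp: pwg_def power_le_one)

definition Yg :: "nat list \<Rightarrow> nat \<Rightarrow> real \<Rightarrow> real" where "Yg w i x = indicator (EE w i) x - pwg w"

lemma Y_meas[measurable]: "Yg w i \<in> borel_measurable borel"
  unfolding Yg_def by measurable

context
  fixes w :: "nat list"
  assumes w01: "set w \<subseteq> {0,1}"
begin

lemma w_le1: "j < length w \<Longrightarrow> w ! j \<le> 1"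
proof -
  assume "j < length w"
  then have "w ! j \<in> {0,1}" using w01 nth_mem by blast
  then show ?thesis by auto
qed

lemma EE_measure: "i \<ge> 1 \<Longrightarrow> measure lborel (EE w i) = (1/2)^length w"
proof -
  assume i: "i \<ge> 1"
  have "emeasure lborel (EE w i) = ennreal ((1/2)^card {i..<i + length w})"
    unfolding EE_cyl
    by (rule cyl_measure[where n="i + length w"]) (use i w_le1 in auto)
  then show ?thesis by (simp add: measure_def)
qed

lemma EE_inter_measure:
  assumes i: "i \<ge> 1" and ij: "i + length w \<le> j"
  shows "measure lborel (EE w i \<inter> EE w j) = ((1/2)^length w)^2"
proof -
  let ?D = "{i..<i + length w} \<union> {j..<j + length w}"
  let ?v = "\<lambda>d. if d < i + length w then w ! (d - i) else w ! (d - j)"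
  let ?D1 = "{i..<i + length w}" and ?D2 = "{j..<j + length w}"
  have "EE w i \<inter> EE w j = cyl ?D ?v"
  proof -
    have e: "(\<forall>d\<in>?D. bdig x d = ?v d) \<longleftrightarrow> (\<forall>d\<in>?D1. bdig x d = w ! (d - i)) \<and> (\<forall>d\<in>?D2. bdig x d = w ! (d - j))" for x
    proof -
      have "(\<forall>d\<in>?D. bdig x d = ?v d) \<longleftrightarrow> (\<forall>d\<in>?D1. bdig x d = ?v d) \<and> (\<forall>d\<in>?D2. bdig x d = ?v d)"
        by (rule ball_Un)
      also have "(\<forall>d\<in>?D1. bdig x d = ?v d) \<longleftrightarrow> (\<forall>d\<in>?D1. bdig x d = w ! (d - i))"
        by (intro ball_cong) auto
      also have "(\<forall>d\<in>?D2. bdig x d = ?v d) \<longleftrightarrow> (\<forall>d\<in>?D2. bdig x d = w ! (d - j))"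
        using ij by (intro ball_cong) auto
      finally show ?thesis .
    qed
    show ?thesis unfolding EE_cyl cyl_def using e by blast
  qed
  moreover have "card ?D = 2 * length w"
    using ij by (subst card_Un_disjoint) auto
  moreover have "emeasure lborel (cyl ?D ?v) = ennreal ((1/2)^card ?D)"
  proof (rule cyl_measure[where n="j + length w"])
    show "finite ?D" by simp
    show "?D \<subseteq> {1..j + length w}" using i ij by auto
    show "\<forall>d\<in>?D. ?v d \<le> 1"
    proof
      fix d assume d: "d \<in> ?D"
      show "?v d \<le> 1"
      proof (cases "d < i + length w")
        case True
        then have "d - i < length w" "d \<ge> i" using d ij by auto
        then show ?thesis using True w_le1 by simp
      next
        case False
        then have "d - j < length w" using d by auto
        then show ?thesis using False w_le1 by simp
      qed
    qed
  qed
  ultimately show ?thesis by (simp add: measure_def power_mult[symmetric] mult.commute)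
qed

abbreviation pw where "pw \<equiv> pwg w"
abbreviation Y where "Y \<equiv> Yg w"

lemma Y_bound: "\<bar>Y i x\<bar> \<le> 1"
  using pw_bounds by (auto simp: Yg_def indicator_def)

lemma YY_integral:
  assumes "i \<ge> 1" "j \<ge> 1"
  shows "integral\<^sup>L M01 (\<lambda>x. Y i x * Y j x) = measure lborel (EE w i \<inter> EE w j) - pw^2"
proof -
  have eq: "Y i x * Y j x = indicator (EE w i \<inter> EE w j) x - pw * indicator (EE w i) x - pw * indicator (EE w j) x + pw^2" for x
    by (simp add: Yg_def indicator_inter_arith algebra_simps power2_eq_square)
  have int: "integrable M01 (indicator A :: real \<Rightarrow> real)" if "A \<in> sets borel" for A
    by (rule M01_integrable[where B=1]) (use that in auto)
  let ?I1 = "indicator (EE w i \<inter> EE w j) :: real \<Rightarrow> real"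
  let ?I2 = "indicator (EE w i) :: real \<Rightarrow> real"
  let ?I3 = "indicator (EE w j) :: real \<Rightarrow> real"
  have i1: "integrable M01 ?I1" by (rule int) measurable
  have i2: "integrable M01 ?I2" by (rule int) measurable
  have i3: "integrable M01 ?I3" by (rule int) measurable
  have i2': "integrable M01 (\<lambda>x. pw * ?I2 x)" using i2 by (rule integrable_mult_right)
  have i3': "integrable M01 (\<lambda>x. pw * ?I3 x)" using i3 by (rule integrable_mult_right)
  have i12: "integrable M01 (\<lambda>x. ?I1 x - pw * ?I2 x)" using i1 i2' by (rule Bochner_Integration.integrable_diff)
  have i123: "integrable M01 (\<lambda>x. ?I1 x - pw * ?I2 x - pw * ?I3 x)" using i12 i3' by (rule Bochner_Integration.integrable_diff)
  have ic: "integrable M01 (\<lambda>x. pw^2)" by (rule M01_integrable[where B="pw^2"]) auto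
  have "integral\<^sup>L M01 (\<lambda>x. Y i x * Y j x) = integral\<^sup>L M01 (\<lambda>x. ?I1 x - pw * ?I2 x - pw * ?I3 x) + integral\<^sup>L M01 (\<lambda>x. pw^2)"
    unfolding eq by (rule Bochner_Integration.integral_add[OF i123 ic])
  also have "integral\<^sup>L M01 (\<lambda>x. ?I1 x - pw * ?I2 x - pw * ?I3 x) = integral\<^sup>L M01 (\<lambda>x. ?I1 x - pw * ?I2 x) - integral\<^sup>L M01 (\<lambda>x. pw * ?I3 x)"
    by (rule Bochner_Integration.integral_diff[OF i12 i3'])
  also have "integral\<^sup>L M01 (\<lambda>x. ?I1 x - pw * ?I2 x) = integral\<^sup>L M01 ?I1 - integral\<^sup>L M01 (\<lambda>x. pw * ?I2 x)"
    by (rule Bochner_Integration.integral_diff[OF i1 i2'])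
  also have "integral\<^sup>L M01 (\<lambda>x. pw * ?I2 x) = pw * integral\<^sup>L M01 ?I2" by (rule integral_mult_right_zero)
  also have "integral\<^sup>L M01 (\<lambda>x. pw * ?I3 x) = pw * integral\<^sup>L M01 ?I3" by (rule integral_mult_right_zero)
  also have "integral\<^sup>L M01 (\<lambda>x. pw^2) = pw^2"
    using M01_measure[of "{0..<1}"] by simp
  finally have "integral\<^sup>L M01 (\<lambda>x. Y i x * Y j x) =
    integral\<^sup>L M01 ?I1 - pw * integral\<^sup>L M01 ?I2 - pw * integral\<^sup>L M01 ?I3 + pw^2" .
  also have "integral\<^sup>L M01 ?I1 = measure lborel (EE w i \<inter> EE w j)"
    by (rule M01_ind) (use EE_sub[of w i] in auto)
  also have "integral\<^sup>L M01 ?I2 = pw"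
    using M01_ind[of "EE w i"] EE_sub[of w i] EE_measure[OF assms(1)] by (simp add: pwg_def)
  also have "integral\<^sup>L M01 ?I3 = pw"
    using M01_ind[of "EE w j"] EE_sub[of w j] EE_measure[OF assms(2)] by (simp add: pwg_def)
  finally show ?thesis by (simp add: power2_eq_square)
qed

end


lemma near_card: "card {j\<in>{1..N}. j < i + L \<and> i < j + (L::nat)} \<le> 2 * L"
proof -
  have "{j\<in>{1..N}. j < i + L \<and> i < j + L} \<subseteq> {i - L<..<i + L}" by auto
  then have "card {j\<in>{1..N}. j < i + L \<and> i < j + L} \<le> card {i - L<..<i + L}"
    by (intro card_mono) auto
  also have "\<dots> \<le> 2 * L" by simp
  finally show ?thesis .
qed

definition SS :: "nat list \<Rightarrow> nat \<Rightarrow> real \<Rightarrow> real" where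
  "SS w N x = (\<Sum>i\<in>{1..N}. indicator (EE w i) x - pwg w)"

lemma SS_meas[measurable]: "SS w N \<in> borel_measurable borel"
  unfolding SS_def by measurable

lemma SS_cnt: "x \<in> {0..<1} \<Longrightarrow> SS w N x = real (cnt x w N) - real N * pwg w"
proof -
  assume x: "x \<in> {0..<1}"
  have "SS w N x = (\<Sum>i\<in>{1..N}. indicator (EE w i) x) - real N * pwg w"
    by (simp add: SS_def sum_subtractf)
  also have "(\<Sum>i\<in>{1..N}. indicator (EE w i) x) = (\<Sum>i\<in>{1..N}. if win x w i then 1 else (0::real))"
    using x by (intro sum.cong refl) (auto simp: indicator_def EE_def)
  also have "\<dots> = real (cnt x w N)"
    by (simp add: sum.If_cases Int_def cnt_def)
  finally show ?thesis .
qed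

context
  fixes w :: "nat list"
  assumes w01: "set w \<subseteq> {0,1}"
begin

lemma Yint: "integrable M01 (\<lambda>x. Yg w i x * Yg w j x)"
proof (rule M01_integrable[where B=1])
  show "(\<lambda>x. Yg w i x * Yg w j x) \<in> borel_measurable borel" by measurable
  fix x show "\<bar>Yg w i x * Yg w j x\<bar> \<le> 1"
    using Y_bound[OF w01, of i x] Y_bound[OF w01, of j x] by (simp add: abs_mult mult_le_one)
qed

lemma YY_le: "i \<ge> 1 \<Longrightarrow> j \<ge> 1 \<Longrightarrow> integral\<^sup>L M01 (\<lambda>x. Yg w i x * Yg w j x) \<le> (if j < i + length w \<and> i < j + length w then 1 else 0)"
proof -
  assume ij: "i \<ge> 1" "j \<ge> 1"
  show ?thesis
  proof (cases "j < i + length w \<and> i < j + length w")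
    case True
    have "integral\<^sup>L M01 (\<lambda>x. Yg w i x * Yg w j x) \<le> integral\<^sup>L M01 (\<lambda>x. 1)"
    proof (rule integral_mono[OF Yint])
      show "integrable M01 (\<lambda>x. 1::real)" by (rule M01_integrable[where B=1]) auto
      fix x show "Yg w i x * Yg w j x \<le> 1"
        using Y_bound[OF w01, of i x] Y_bound[OF w01, of j x] abs_le_D1 abs_mult mult_le_one by (metis abs_ge_zero)
    qed
    also have "\<dots> = 1" using M01_measure[of "{0..<1}"] by simp
    finally show ?thesis using True by simp
  next
    case False
    then have "i + length w \<le> j \<or> j + length w \<le> i" by auto
    then have "measure lborel (EE w i \<inter> EE w j) = (pwg w)^2"
    proof
      assume "i + length w \<le> j"
      then show ?thesis using EE_inter_measure[OF w01 ij(1), of j] by (simp add: pwg_def)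
    next
      assume "j + length w \<le> i"
      then show ?thesis using EE_inter_measure[OF w01 ij(2), of i] by (simp add: pwg_def Int_commute)
    qed
    then show ?thesis using YY_integral[OF w01 ij] False by simp
  qed
qed

lemma second_moment: "integral\<^sup>L M01 (\<lambda>x. (SS w N x)^2) \<le> 2 * length w * N"
proof -
  let ?I = "{1..N}"
  have sq: "(SS w N x)^2 = (\<Sum>i\<in>?I. \<Sum>j\<in>?I. Yg w i x * Yg w j x)" for x
    by (simp add: SS_def Yg_def power2_eq_square sum_product)
  have "integral\<^sup>L M01 (\<lambda>x. (SS w N x)^2) = (\<Sum>i\<in>?I. integral\<^sup>L M01 (\<lambda>x. \<Sum>j\<in>?I. Yg w i x * Yg w j x))"
    unfolding sq by (rule Bochner_Integration.integral_sum) (rule Bochner_Integration.integrable_sum, rule Yint)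
  also have "\<dots> = (\<Sum>i\<in>?I. \<Sum>j\<in>?I. integral\<^sup>L M01 (\<lambda>x. Yg w i x * Yg w j x))"
    by (intro sum.cong refl Bochner_Integration.integral_sum Yint)
  also have "\<dots> \<le> (\<Sum>i\<in>?I. \<Sum>j\<in>?I. (if j < i + length w \<and> i < j + length w then 1 else 0))"
    by (intro sum_mono YY_le) auto
  also have "\<dots> = (\<Sum>i\<in>?I. real (card {j\<in>?I. j < i + length w \<and> i < j + length w}))"
    by (simp add: sum.If_cases Int_def)
  also have "\<dots> \<le> (\<Sum>i\<in>?I. real (2 * length w))"
    by (intro sum_mono of_nat_mono near_card)
  also have "\<dots> = 2 * length w * N" by simp
  finally show ?thesis .
qed

lemma bad_bound:
  assumes e: "0 < e" and N: "N \<ge> 1"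
  shows "measure lborel {x\<in>{0..<1}. e * N \<le> \<bar>SS w N x\<bar>} \<le> 2 * length w / (e^2 * N)"
proof -
  have int: "integrable M01 (\<lambda>x. (SS w N x)^2)"
  proof (rule M01_integrable[where B="(2 * N)^2"])
    fix x
    have "\<bar>SS w N x\<bar> \<le> (\<Sum>i\<in>{1..N}. \<bar>indicator (EE w i) x - pwg w\<bar>)" unfolding SS_def by (rule sum_abs)
    also have "\<dots> \<le> (\<Sum>i\<in>{1..N}. 2)"
      using pw_bounds[of w] by (intro sum_mono) (auto simp: indicator_def)
    finally have "\<bar>SS w N x\<bar> \<le> 2 * N" by simp
    then have "(SS w N x)^2 \<le> (2 * real N)^2" using abs_le_square_iff[of "SS w N x" "2 * real N"] by simp
    then show "\<bar>(SS w N x)^2\<bar> \<le> (2 * N)^2" by simp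
  qed measurable
  have c: "0 < (e * N)^2" using e N by simp
  have seteq: "{x\<in>{0..<1}. e * N \<le> \<bar>SS w N x\<bar>} = {x\<in>space M01. (e * N)^2 \<le> (SS w N x)^2}"
  proof -
    have ab: "\<bar>e * N\<bar> = e * N" using e by simp
    have iff: "e * N \<le> \<bar>SS w N x\<bar> \<longleftrightarrow> (e * N)^2 \<le> (SS w N x)^2" for x
      using abs_le_square_iff[of "e * N" "SS w N x"] unfolding ab .
    show ?thesis unfolding M01_space using iff by blast
  qed
  have sub: "{x\<in>{0..<1}. e * N \<le> \<bar>SS w N x\<bar>} \<subseteq> {0..<1}" by auto
  have "measure lborel {x\<in>{0..<1}. e * N \<le> \<bar>SS w N x\<bar>} = measure M01 {x\<in>{0..<1}. e * N \<le> \<bar>SS w N x\<bar>}"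
    using M01_measure[OF sub] by simp
  also have "\<dots> = measure M01 {x\<in>space M01. (e * N)^2 \<le> (SS w N x)^2}" unfolding seteq ..
  also have "\<dots> \<le> integral\<^sup>L M01 (\<lambda>x. (SS w N x)^2) / (e * N)^2"
    by (rule integral_Markov_inequality_measure[OF int _ _ c, where A="{}"]) auto
  also have "\<dots> \<le> (2 * length w * N) / (e * N)^2"
    by (intro divide_right_mono second_moment) simp
  also have "\<dots> = 2 * length w / (e^2 * N)" using N by (simp add: power2_eq_square field_simps)
  finally show ?thesis .
qed

end


lemma interp:
  fixes f :: "nat \<Rightarrow> nat" and p :: real
  assumes mono: "\<And>a b. a \<le> b \<Longrightarrow> f a \<le> f b"
    and lip: "\<And>a b. a \<le> b \<Longrightarrow> f b \<le> f a + (b - a)"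
    and lim: "(\<lambda>n. real (f (n^2)) / real (n^2)) \<longlonglongrightarrow> p"
  shows "(\<lambda>N. real (f N) / real N) \<longlonglongrightarrow> p"
proof -
  define g where "g = (\<lambda>n. real (f (n^2)) / real (n^2))"
  define lo where "lo n = g n * (real n / real (Suc n))^2" for n
  define hi where "hi n = g n + real (2*n+1) / real (n^2)" for n
  have glim: "g \<longlonglongrightarrow> p" using lim unfolding g_def .
  have lolim: "lo \<longlonglongrightarrow> p * 1^2"
    unfolding lo_def by (intro tendsto_mult glim tendsto_power LIMSEQ_n_over_Suc_n)
  have qlim: "(\<lambda>n. real (2*n+1) / real (n^2)) \<longlonglongrightarrow> 0"
  proof (rule real_tendsto_sandwich[where f="\<lambda>n. 0" and h="\<lambda>n. 3 / real n"])
    show "\<forall>\<^sub>F n in sequentially. 0 \<le> real (2*n+1) / real (n^2)" by simp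
    have "real (2*n+1) / real (n^2) \<le> 3 / real n" if "n \<ge> 1" for n
    proof -
      have "real (2*n+1) \<le> 3 * real n" using that by simp
      then have "real (2*n+1) / real (n^2) \<le> (3 * real n) / real (n^2)"
        by (intro divide_right_mono) auto
      also have "\<dots> = 3 / real n" using that by (simp add: power2_eq_square)
      finally show ?thesis .
    qed
    then show "\<forall>\<^sub>F n in sequentially. real (2*n+1) / real (n^2) \<le> 3 / real n"
      unfolding eventually_sequentially by blast
    show "(\<lambda>n. 3 / real n) \<longlonglongrightarrow> 0" by (rule lim_const_over_n)
  qed simp
  have hilim: "hi \<longlonglongrightarrow> p + 0" unfolding hi_def by (intro tendsto_add glim qlim)
  have sq: "filterlim floor_sqrt sequentially sequentially"
    unfolding filterlim_at_top eventually_sequentially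
    by (metis le_floor_sqrtI)
  have lo2: "(\<lambda>N. lo (floor_sqrt N)) \<longlonglongrightarrow> p" using filterlim_compose[OF lolim sq] by simp
  have hi2: "(\<lambda>N. hi (floor_sqrt N)) \<longlonglongrightarrow> p" using filterlim_compose[OF hilim sq] by simp
  show ?thesis
  proof (rule real_tendsto_sandwich[OF _ _ lo2 hi2])
    have "lo (floor_sqrt N) \<le> real (f N) / real N \<and> real (f N) / real N \<le> hi (floor_sqrt N)" if N: "N \<ge> 1" for N
    proof -
      define q where "q = floor_sqrt N"
      have s1: "q \<ge> 1" using N by (simp add: q_def Suc_le_eq)
      have sN: "q^2 \<le> N" unfolding q_def by simp
      have Ns: "N < (Suc q)^2" unfolding q_def by (rule Suc_floor_sqrt_power2_gt)
      have fm: "f (q^2) \<le> f N" by (rule mono[OF sN])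
      have fl: "f N \<le> f (q^2) + (N - q^2)" by (rule lip[OF sN])
      have d: "N - q^2 \<le> 2*q + 1" using Ns by (simp add: power2_eq_square)
      have pos: "0 < real (q^2)" using s1 by simp
      have Npos: "0 < real N" using N by simp
      have "lo q = real (f (q^2)) / real (q^2) * (real (q^2) / real ((Suc q)^2))"
        unfolding lo_def g_def by (simp add: power_divide)
      also have "\<dots> = real (f (q^2)) / real ((Suc q)^2)" using pos by simp
      also have "\<dots> \<le> real (f N) / real N"
      proof (rule frac_le)
        show "real (f (q^2)) \<le> real (f N)" using fm by simp
        show "0 < real N" by (rule Npos)
        show "real N \<le> real ((Suc q)^2)" using Ns by (simp only: of_nat_le_iff less_imp_le)
      qed simp
      finally have L: "lo q \<le> real (f N) / real N" .
      have "real (f N) / real N \<le> real (f (q^2) + (2*q+1)) / real N"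
        using fl d Npos by (intro divide_right_mono) auto
      also have "\<dots> \<le> real (f (q^2) + (2*q+1)) / real (q^2)"
        by (rule divide_left_mono) (use sN pos Npos in \<open>auto intro: mult_pos_pos\<close>)
      also have "\<dots> = hi q" unfolding hi_def g_def by (simp add: add_divide_distrib)
      finally have H: "real (f N) / real N \<le> hi q" .
      show ?thesis using L H by (simp add: q_def)
    qed
    then show "\<forall>\<^sub>F N in sequentially. lo (floor_sqrt N) \<le> real (f N) / real N"
      "\<forall>\<^sub>F N in sequentially. real (f N) / real N \<le> hi (floor_sqrt N)"
      unfolding eventually_sequentially by blast+
  qed
qed


lemma cnt_mono: "a \<le> b \<Longrightarrow> cnt x w a \<le> cnt x w b"
  unfolding cnt_def by (rule card_mono) auto

lemma cnt_lip: "a \<le> b \<Longrightarrow> cnt x w b \<le> cnt x w a + (b - a)"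
proof -
  assume ab: "a \<le> b"
  have "{i\<in>{1..b}. win x w i} \<subseteq> {i\<in>{1..a}. win x w i} \<union> {a<..b}" by auto
  then have "cnt x w b \<le> card ({i\<in>{1..a}. win x w i} \<union> {a<..b})"
    unfolding cnt_def by (intro card_mono) auto
  also have "\<dots> \<le> cnt x w a + card {a<..b}" unfolding cnt_def by (rule card_Un_le)
  finally show ?thesis by simp
qed

lemma cnt_sum: "real (cnt x w N) = (\<Sum>i\<in>{1..N}. if win x w i then 1 else (0::real))"
  by (simp add: sum.If_cases Int_def cnt_def)

lemma win_meas[measurable]: "Measurable.pred borel (\<lambda>x. win x w i)"
  unfolding win_def by measurable

lemma normal2_alt: "normal2 = {x\<in>{0..1}. \<forall>w. w \<noteq> [] \<and> set w \<subseteq> {0,1} \<longrightarrow>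
   ((\<lambda>N. (\<Sum>i\<in>{1..N}. if win x w i then 1 else (0::real)) / real N) \<longlonglongrightarrow> 1 / 2 ^ length w)}"
proof -
  have e: "(\<lambda>N. (\<Sum>i\<in>{1..N}. if win x w i then 1 else (0::real)) / real N) =
    (\<lambda>N. real (card {i \<in> {1..N}. \<forall>j<length w. bdig x (i + j) = w ! j}) / real N)" for x w
    using cnt_sum[of x w] by (simp add: cnt_def win_def)
  show ?thesis unfolding normal2_def e by (rule refl)
qed

lemma normal2_meas: "normal2 \<in> sets borel"
  unfolding normal2_alt by measurable

definition BadA :: "nat list \<Rightarrow> real \<Rightarrow> nat \<Rightarrow> real set" where
  "BadA w e n = {x\<in>{0..<1}. e * real (n^2) \<le> \<bar>SS w (n^2) x\<bar>}"

lemma BadA_meas[measurable]: "BadA w e n \<in> sets borel"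
  unfolding BadA_def by measurable

lemma AE_square:
  assumes w01: "set w \<subseteq> {0,1}" and e: "0 < e"
  shows "AE x in lborel. eventually (\<lambda>n. x \<in> space lborel - BadA w e n) sequentially"
proof (rule borel_cantelli_AE1)
  show "BadA w e n \<in> sets lborel" for n by simp
  have sub: "BadA w e n \<subseteq> {0..<1}" for n by (auto simp: BadA_def)
  show "emeasure lborel (BadA w e n) < \<infinity>" for n
  proof -
    have "emeasure lborel (BadA w e n) \<le> emeasure lborel {0..<1::real}"
      by (rule emeasure_mono[OF sub]) simp
    then show ?thesis by (simp add: le_less_trans)
  qed
  let ?C = "2 * real (length w) / e^2"
  show "summable (\<lambda>n. measure lborel (BadA w e n))"
  proof (rule summable_comparison_test'[where g="\<lambda>n. ?C * inverse (real n ^ 2)" and N=1])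
    show "summable (\<lambda>n. ?C * inverse (real n ^ 2))"
      by (intro summable_mult inverse_power_summable) simp
    fix n :: nat assume n: "n \<ge> 1"
    have "measure lborel (BadA w e n) \<le> 2 * length w / (e^2 * real (n^2))"
      unfolding BadA_def by (rule bad_bound[OF w01 e]) (use n in simp)
    also have "\<dots> = ?C * inverse (real n ^ 2)" by (simp add: field_simps)
    finally show "norm (measure lborel (BadA w e n)) \<le> ?C * inverse (real n ^ 2)" by simp
  qed
qed

lemma key_pointwise:
  assumes x: "x \<in> {0..<1}"
    and ev: "\<forall>w m. set w \<subseteq> {0,1} \<longrightarrow> eventually (\<lambda>n. x \<notin> BadA w (inverse (real (Suc m))) n) sequentially"
  shows "x \<in> normal2"
proof -
  have "(\<lambda>N. real (cnt x w N) / real N) \<longlonglongrightarrow> 1 / 2 ^ length w" if w: "w \<noteq> []" "set w \<subseteq> {0,1}" for w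
  proof -
    have lim: "(\<lambda>n. real (cnt x w (n^2)) / real (n^2)) \<longlonglongrightarrow> pwg w"
      unfolding LIMSEQ_iff
    proof (intro allI impI)
      fix r :: real assume r: "0 < r"
      obtain m where m: "inverse (real (Suc m)) < r" using reals_Archimedean[OF r] by blast
      have "eventually (\<lambda>n. x \<notin> BadA w (inverse (real (Suc m))) n) sequentially"
        using ev w(2) by simp
      then obtain n0 where n0: "\<And>n. n \<ge> n0 \<Longrightarrow> x \<notin> BadA w (inverse (real (Suc m))) n"
        unfolding eventually_sequentially by auto
      show "\<exists>no. \<forall>n\<ge>no. norm (real (cnt x w (n^2)) / real (n^2) - pwg w) < r"
      proof (intro exI allI impI)
        fix n assume n: "n \<ge> max n0 1"
        have npos: "0 < real (n^2)" using n by simp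
        have "\<not> inverse (real (Suc m)) * real (n^2) \<le> \<bar>SS w (n^2) x\<bar>"
          using n0[of n] n x by (simp add: BadA_def)
        then have lt: "\<bar>real (cnt x w (n^2)) - real (n^2) * pwg w\<bar> < inverse (real (Suc m)) * real (n^2)"
          using SS_cnt[OF x, of w "n^2"] by simp
        have "norm (real (cnt x w (n^2)) / real (n^2) - pwg w) = \<bar>real (cnt x w (n^2)) - real (n^2) * pwg w\<bar> / real (n^2)"
          using npos by (simp add: field_simps)
        also have "\<dots> < inverse (real (Suc m))"
          using lt npos by (simp add: divide_less_eq)
        finally show "norm (real (cnt x w (n^2)) / real (n^2) - pwg w) < r" using m by simp
      qed
    qed
    have "(\<lambda>N. real (cnt x w N) / real N) \<longlonglongrightarrow> pwg w"
      by (rule interp[OF cnt_mono cnt_lip lim])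
    then show ?thesis by (simp add: pwg_def power_one_over)
  qed
  then show ?thesis using x unfolding normal2_def cnt_def win_def by auto
qed

lemma AE_normal: "AE x in lborel. x \<in> {0..<1} \<longrightarrow> x \<in> normal2"
proof -
  have "AE x in lborel. set w \<subseteq> {0,1} \<longrightarrow> eventually (\<lambda>n. x \<notin> BadA w (inverse (real (Suc m))) n) sequentially" for w m
  proof (cases "set w \<subseteq> {0,1}")
    case True
    then show ?thesis using AE_square[OF True, of "inverse (real (Suc m))"] by simp
  qed simp
  then have "AE x in lborel. \<forall>w m. set w \<subseteq> {0,1} \<longrightarrow> eventually (\<lambda>n. x \<notin> BadA w (inverse (real (Suc m))) n) sequentially"
    by (simp add: AE_all_countable)
  then show ?thesis by (rule AE_mp) (intro AE_I2 impI key_pointwise; assumption)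
qed

lemma conj3: "({0..1} - normal2) \<in> null_sets lborel"
proof -
  obtain N where N0: "{x\<in>space lborel. \<not> (x \<in> {0..<1} \<longrightarrow> x \<in> normal2)} \<subseteq> N"
      "emeasure lborel N = 0" "N \<in> sets lborel"
    using AE_normal by (rule AE_E)
  have N: "{x\<in>space lborel. \<not> (x \<in> {0..<1} \<longrightarrow> x \<in> normal2)} \<subseteq> N" "N \<in> null_sets lborel"
    using N0 by (auto simp: null_sets_def)
  have "{0..1} - normal2 \<subseteq> N \<union> {1}" using N(1) by auto
  moreover have "N \<union> {1} \<in> null_sets lborel"
  proof (rule null_sets.Un[OF N(2)])
    show "{1::real} \<in> null_sets lborel" by (simp add: null_sets_def)
  qed
  moreover have "{0..1} - normal2 \<in> sets lborel" using normal2_meas by simp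
  ultimately show ?thesis
    by (metis (no_types, lifting) emeasure_eq_0 null_setsD1 null_setsD2 null_setsI)
qed

lemma conj4: "emeasure lborel (R -` ({0..1} - normal2) \<inter> {0..1}) = 1"
proof -
  let ?P = "R -` ({0..1} - normal2) \<inter> {0..1}"
  have n01: "normal2 \<subseteq> {0..1}" by (auto simp: normal2_def)
  have sub1: "normal2 \<subseteq> ?P" using conj1 n01 by auto
  have sub2: "?P \<subseteq> {0..1}" by auto
  have "?P \<in> sets (restrict_space borel {0..1})"
  proof -
    have "R -` ({0..1} - normal2) \<inter> space (restrict_space borel {0..1::real}) \<in> sets (restrict_space borel {0..1})"
      by (rule measurable_sets[OF conj2]) (use normal2_meas in simp)
    then show ?thesis by simp
  qed
  then have Pm: "?P \<in> sets lborel" by (simp add: sets_restrict_space_iff)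
  have nm: "normal2 \<in> sets lborel" using normal2_meas by simp
  have "emeasure lborel {0..1::real} = emeasure lborel normal2 + emeasure lborel ({0..1} - normal2)"
    using plus_emeasure[OF nm, of "{0..1} - normal2"] n01 conj3
    by (metis Diff_disjoint Diff_partition null_setsD2)
  then have en: "emeasure lborel normal2 = 1" using null_setsD1[OF conj3] by simp
  have "emeasure lborel normal2 \<le> emeasure lborel ?P" by (rule emeasure_mono[OF sub1 Pm])
  moreover have "emeasure lborel ?P \<le> emeasure lborel {0..1::real}" by (rule emeasure_mono[OF sub2]) simp
  ultimately show ?thesis using en by (simp add: order.antisym)
qed

theorem proposition5p2:
  shows "R ` normal2 \<subseteq> {0..1} - normal2
    \<and> R \<in> borel_measurable (restrict_space borel {0..1})
    \<and> ({0..1} - normal2) \<in> null_sets lborel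
    \<and> emeasure lborel (R -` ({0..1} - normal2) \<inter> {0..1}) = 1"
  using conj1 conj2 conj3 conj4 by blast


end
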